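(* Let $d=2$ and let $E\subset[1,2]$ with $\dim_{\mathrm{M}}E=\beta$, $\dim_{\mathrm{qA}}E=\gamma$, $\dim_{\mathrm{A}}E=\gamma_*$, and let $M_Ef(x)=\sup_{t\in E}\left|\int_{\mathbb{S}^{1}}f(x-ty)\,d\sigma(y)\right|$. If $M_E$ is of radial restricted weak type $(p,2p)$, then $p\ge\max\{\frac{\beta+3}{2},\gamma_*+1\}$. Additionally, suppose that $E$ is quasi-Assouad regular and $2\gamma\ge\beta+1$. Then $\mathcal{T}^{rad}_E\subset\mathcal{Q}(\beta,\gamma)$.
   Context: $\sigma$ is the normalized arc-length measure on $\mathbb{S}^1$. $N(F,a)$ is the minimal number of intervals of length $a$ needed to cover $F$. $\dim_{\mathrm{M}}E=\inf\{a>0:\exists c,\ N(E,\delta)\le c\delta^{-a}\ \forall\delta\in(0,1)\}$; $\dim_{\mathrm{A}}E=\inf\{a>0:\exists c \text{ s.t. for all intervals } I,\ \delta\in(0,|I|),\ N(E\cap I,\delta)\le c(\delta/|I|)^{-a}\}$; $\overline{\dim}_{\mathrm{A},\theta}E=\inf\{a>0:\exists c \text{ s.t. } \forall\delta\in(0,1),\ \forall I, |I|\ge\delta^\theta,\ N(E\cap I,\delta)\le c(\delta/|I|)^{-a}\}$ for $\theta\in[0,1]$; $\dim_{\mathrm{qA}}E=\lim_{\theta\nearrow1}\overline{\dim}_{\mathrm{A},\theta}E$. $E$ is quasi-Assouad regular if either $\gamma=0$ or $\overline{\dim}_{\mathrm{A},\theta}E=\gamma$ for every $\theta\in(1-\beta/\gamma,1)$.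 $M_E$ is of radial restricted weak type $(p,q)$ if it is bounded from $L^{p,1}_{rad}(\mathbb{R}^2)$ (radial functions in the Lorentz space $L^{p,1}$) to $L^{q,\infty}(\mathbb{R}^2)$. $\mathcal{T}^{rad}_E=\{(1/p,1/q)\in[0,1]^2: M_E$ bounded $L^p_{rad}(\mathbb{R}^2)\to L^q(\mathbb{R}^2)\}$. In $d=2$: $O=(0,0)$, $Q_1(b)=(\frac1{1+b},\frac1{1+b})$, $Q_2(b)=(\frac2{3+b},\frac1{3+b})$; for $1\le\beta+1\le2\gamma\le2$, $\theta=\frac{1-\beta}{2(\gamma-\beta)}$ if $\beta<1$, $\theta=1$ if $\beta=\gamma=1$, $Q_3(\beta,\gamma)=\big(\frac{2-\beta(1-\theta)}{2(1+\gamma\theta)},\frac{1}{2(1+\gamma\theta)}\big)$, and $\mathcal{Q}(\beta,\gamma)$ is the closed quadrilateral with vertices $O,Q_1(\beta),Q_3(\beta,\gamma),Q_2(2\gamma-1)$. *)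

theory Defs
  imports "HOL-Analysis.Analysis"
begin

definition cover_num :: "real set \<Rightarrow> real \<Rightarrow> nat" where
  "cover_num F a = Inf {card C | C. finite C \<and> F \<subseteq> (\<Union>c\<in>C. {c..c+a})}"

definition minkowski_dim :: "real set \<Rightarrow> real" where
  "minkowski_dim E = Inf {s. s > 0 \<and> (\<exists>c. \<forall>\<delta>. 0 < \<delta> \<and> \<delta> < 1 \<longrightarrow>
      real (cover_num E \<delta>) \<le> c * \<delta> powr (-s))}"

definition assouad_dim :: "real set \<Rightarrow> real" where
  "assouad_dim E = Inf {s. s > 0 \<and> (\<exists>c. \<forall>a b \<delta>. a < b \<and> 0 < \<delta> \<and> \<delta> < b - a \<longrightarrow>
      real (cover_num (E \<inter> {a..b}) \<delta>) \<le> c * (\<delta> / (b - a)) powr (-s))}"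

definition assouad_spec :: "real set \<Rightarrow> real \<Rightarrow> real" where
  "assouad_spec E \<theta> = Inf {s. s > 0 \<and> (\<exists>c. \<forall>\<delta> a b. 0 < \<delta> \<and> \<delta> < 1 \<and> a < b \<and>
      b - a \<ge> \<delta> powr \<theta> \<longrightarrow>
      real (cover_num (E \<inter> {a..b}) \<delta>) \<le> c * (\<delta> / (b - a)) powr (-s))}"

definition qassouad_dim :: "real set \<Rightarrow> real" where
  "qassouad_dim E = Lim (at_left 1) (assouad_spec E)"

definition qA_regular :: "real set \<Rightarrow> bool" where
  "qA_regular E \<longleftrightarrow> qassouad_dim E = 0 \<or>
     (\<forall>\<theta>. 1 - minkowski_dim E / qassouad_dim E < \<theta> \<and> \<theta> < 1 \<longrightarrow>
        assouad_spec E \<theta> = qassouad_dim E)"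

definition circ_avg :: "(real^2 \<Rightarrow> real) \<Rightarrow> real^2 \<Rightarrow> real \<Rightarrow> real" where
  "circ_avg f x t = (1 / (2 * pi)) *
     (LINT s:{0..2*pi}|lborel. f (x - t *\<^sub>R vector [cos s, sin s]))"

definition sph_max :: "real set \<Rightarrow> (real^2 \<Rightarrow> real) \<Rightarrow> real^2 \<Rightarrow> ennreal" where
  "sph_max E f x = (SUP t\<in>E. ennreal \<bar>circ_avg f x t\<bar>)"

definition radial :: "(real^2 \<Rightarrow> real) \<Rightarrow> bool" where
  "radial f \<longleftrightarrow> (\<exists>g. \<forall>x. f x = g (norm x))"

definition epowr :: "ennreal \<Rightarrow> real \<Rightarrow> ennreal" where
  "epowr x a = (if x = \<infinity> then \<infinity> else ennreal (enn2real x powr a))"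

text \<open>Lebesgue outer measure on R^2 (so that no measurability of the maximal function is needed).\<close>
definition outer_lmeasure :: "(real^2) set \<Rightarrow> ennreal" where
  "outer_lmeasure S = (INF A\<in>{A \<in> sets lebesgue. S \<subseteq> A}. emeasure lebesgue A)"

definition distf :: "(real^2 \<Rightarrow> ennreal) \<Rightarrow> real \<Rightarrow> ennreal" where
  "distf g s = outer_lmeasure {x. ennreal s < g x}"

definition lorentz_p1 :: "real \<Rightarrow> (real^2 \<Rightarrow> ennreal) \<Rightarrow> ennreal" where
  "lorentz_p1 p g = ennreal p * (\<integral>\<^sup>+ s. epowr (distf g s) (1 / p) * indicator {0<..} s \<partial>lborel)"

definition weak_norm :: "real \<Rightarrow> (real^2 \<Rightarrow> ennreal) \<Rightarrow> ennreal" where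
  "weak_norm q g = (SUP s\<in>{0<..}. ennreal s * epowr (distf g s) (1 / q))"

text \<open>L^p norm with exponent given as u = 1/p in [0,1] (u = 0 is p = \<infinity>, the essential sup);
  for u > 0 via the layer-cake formula ||g||_p^p = p \<integral>_0^\<infinity> s^{p-1} |{|g|>s}| ds.\<close>
definition lp_norm :: "real \<Rightarrow> (real^2 \<Rightarrow> ennreal) \<Rightarrow> ennreal" where
  "lp_norm u g = (if u = 0 then Inf {ennreal s | s. 0 \<le> s \<and> distf g s = 0}
     else epowr (\<integral>\<^sup>+ s. ennreal ((1 / u) * s powr (1 / u - 1)) * distf g s * indicator {0<..} s \<partial>lborel) u)"

definition rad_restricted_weak :: "real set \<Rightarrow> real \<Rightarrow> real \<Rightarrow> bool" where
  "rad_restricted_weak E p q \<longleftrightarrow> (\<exists>C::real. \<forall>f. f \<in> borel_measurable borel \<and> radial f \<and>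
      lorentz_p1 p (\<lambda>x. ennreal \<bar>f x\<bar>) < \<infinity> \<longrightarrow>
      weak_norm q (sph_max E f) \<le> ennreal C * lorentz_p1 p (\<lambda>x. ennreal \<bar>f x\<bar>))"

definition T_rad :: "real set \<Rightarrow> (real \<times> real) set" where
  "T_rad E = {(u, v). 0 \<le> u \<and> u \<le> 1 \<and> 0 \<le> v \<and> v \<le> 1 \<and>
     (\<exists>C::real. \<forall>f. f \<in> borel_measurable borel \<and> radial f \<and>
        lp_norm u (\<lambda>x. ennreal \<bar>f x\<bar>) < \<infinity> \<longrightarrow>
        lp_norm v (sph_max E f) \<le> ennreal C * lp_norm u (\<lambda>x. ennreal \<bar>f x\<bar>))}"

definition Q1 :: "real \<Rightarrow> real \<times> real" where "Q1 b = (1 / (1 + b), 1 / (1 + b))"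
definition Q2 :: "real \<Rightarrow> real \<times> real" where "Q2 b = (2 / (3 + b), 1 / (3 + b))"
definition theta_Q :: "real \<Rightarrow> real \<Rightarrow> real" where
  "theta_Q \<beta> \<gamma> = (if \<beta> < 1 then (1 - \<beta>) / (2 * (\<gamma> - \<beta>)) else 1)"
definition Q3 :: "real \<Rightarrow> real \<Rightarrow> real \<times> real" where
  "Q3 \<beta> \<gamma> = (let \<theta> = theta_Q \<beta> \<gamma> in
     ((2 - \<beta> * (1 - \<theta>)) / (2 * (1 + \<gamma> * \<theta>)), 1 / (2 * (1 + \<gamma> * \<theta>))))"
definition quadQ :: "real \<Rightarrow> real \<Rightarrow> (real \<times> real) set" where
  "quadQ \<beta> \<gamma> = convex hull {(0, 0), Q1 \<beta>, Q3 \<beta> \<gamma>, Q2 (2 * \<gamma> - 1)}"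

end

theory Submission
  imports Defs
begin


abbreviation ev :: "real \<Rightarrow> real^2" where "ev s \<equiv> vector [cos s, sin s]"

lemma inner_ev: "x \<bullet> ev s = x$1 * cos s + x$2 * sin s"
  by (simp add: inner_vec_def sum_2 mult.commute)

lemma norm_sq_vec2: "(norm (x::real^2))^2 = (x$1)^2 + (x$2)^2"
  by (simp add: power2_norm_eq_inner inner_vec_def sum_2 power2_eq_square norm_eq_sqrt_inner)

lemma norm_ev: "norm (ev s) = 1"
proof -
  have "(norm (ev s))^2 = 1" by (simp add: norm_sq_vec2)
  thus ?thesis by (simp add: power2_eq_1_iff) (smt (verit) norm_ge_zero)
qed

lemma dist_ev: "(norm (x - t *\<^sub>R ev s))^2 = (norm x)^2 + t^2 - 2*t*(x$1 * cos s + x$2 * sin s)"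
proof -
  have "(norm (x - t *\<^sub>R ev s))^2 = (x - t *\<^sub>R ev s) \<bullet> (x - t *\<^sub>R ev s)"
    by (simp add: power2_norm_eq_inner)
  also have "\<dots> = x \<bullet> x - 2 * t * (x \<bullet> ev s) + t^2 * (ev s \<bullet> ev s)"
    by (simp add: inner_diff inner_commute algebra_simps power2_eq_square)
  also have "ev s \<bullet> ev s = 1" using norm_ev[of s] by (simp add: power2_norm_eq_inner[symmetric])
  finally show ?thesis by (simp add: inner_ev power2_norm_eq_inner)
qed

lemma polar2:
  assumes "(x::real^2) \<noteq> 0"
  obtains c where "0 \<le> c" "c < 2*pi" "x$1 = norm x * cos c" "x$2 = norm x * sin c"
proof -
  have n: "norm x > 0" using assms by simp
  have "(x$1 / norm x)^2 + (x$2 / norm x)^2 = 1"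
    using n by (simp add: power_divide norm_sq_vec2[symmetric] add_divide_distrib[symmetric])
  then obtain c where "0 \<le> c" "c < 2*pi" "x$1 / norm x = cos c" "x$2 / norm x = sin c"
    by (rule sincos_total_2pi)
  thus ?thesis using that n by (auto simp: field_simps)
qed

lemma one_minus_cos: "1 - cos (y::real) \<le> y^2 / 2"
proof -
  have "cos y = 1 - 2 * (sin (y/2))^2" using cos_double_sin[of "y/2"] by simp
  moreover have "(sin (y/2))^2 \<le> (y/2)^2"
    using abs_sin_x_le_abs_x[of "y/2"] by (metis abs_ge_zero power2_abs power_mono)
  ultimately show ?thesis by (simp add: power_divide)
qed



lemma ev_cont: "continuous_on UNIV ev"
proof -
  have "ev = (\<lambda>s. \<chi> i. if i = 1 then cos s else sin s)"
    by (rule ext, rule vec_eq_iff[THEN iffD2]) (auto simp: forall_2)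
  moreover have "continuous_on UNIV (\<lambda>s::real. \<chi> i::2. if i = 1 then cos s else sin s)"
  proof (intro continuous_on_vec_lambda)
    fix i :: 2
    have c: "continuous_on UNIV (\<lambda>x::real. cos x)" by (rule continuous_on_cos[OF continuous_on_id])
    have s: "continuous_on UNIV (\<lambda>x::real. sin x)" by (rule continuous_on_sin[OF continuous_on_id])
    show "continuous_on UNIV (\<lambda>x::real. if i = 1 then cos x else sin x)"
    proof -
      have "(\<lambda>x::real. if i = 1 then cos x else sin x) = (if i = 1 then cos else sin)" by auto
      thus ?thesis using c s by (cases "i = 1") auto
    qed
  qed
  ultimately show ?thesis by (simp only:)
qed

lemma ev_meas: "ev \<in> borel_measurable borel"
  using ev_cont by (rule borel_measurable_continuous_onI)

lemma avg_ge:
  assumes A: "A \<in> sets borel" and lohi: "0 \<le> lo" "lo \<le> hi" "hi \<le> 2*pi"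
    and inA: "\<And>s. lo \<le> s \<Longrightarrow> s \<le> hi \<Longrightarrow> x - t *\<^sub>R ev s \<in> A"
  shows "circ_avg (indicator A) x t \<ge> (hi - lo) / (2*pi)"
proof -
  let ?g = "\<lambda>s. indicator {0..2*pi} s *\<^sub>R indicator A (x - t *\<^sub>R ev s) :: real"
  have gm: "(\<lambda>s. x - t *\<^sub>R ev s) \<in> borel_measurable borel"
    using ev_meas by measurable
  have m: "(\<lambda>s. indicator A (x - t *\<^sub>R ev s) :: real) \<in> borel_measurable lborel"
    using measurable_compose[OF gm borel_measurable_indicator[OF A]] by (simp add: comp_def)
  have ig: "integrable lborel ?g"
  proof (rule Bochner_Integration.integrable_bound[where f="indicator {0..2*pi} :: real \<Rightarrow> real"])
    show "integrable lborel (indicator {0..2*pi} :: real \<Rightarrow> real)" by (intro integrable_real_indicator) auto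
    show "?g \<in> borel_measurable lborel" using m by simp
    show "AE s in lborel. norm (?g s) \<le> norm (indicator {0..2*pi} s :: real)"
      by (auto simp: indicator_def)
  qed
  have "hi - lo = integral\<^sup>L lborel (indicator {lo..hi} :: real \<Rightarrow> real)"
    using lohi by simp
  also have "\<dots> \<le> integral\<^sup>L lborel ?g"
  proof (rule integral_mono)
    show "integrable lborel (indicator {lo..hi} :: real \<Rightarrow> real)" using lohi by (intro integrable_real_indicator) auto
    show "integrable lborel ?g" by (rule ig)
    fix s show "indicator {lo..hi} s \<le> ?g s"
      using lohi inA[of s] by (auto simp: indicator_def)
  qed
  finally have "hi - lo \<le> (LINT s:{0..2*pi}|lborel. indicator A (x - t *\<^sub>R ev s))"
    by (simp add: set_lebesgue_integral_def)
  hence "(hi - lo) / (2*pi) \<le> (LINT s:{0..2*pi}|lborel. indicator A (x - t *\<^sub>R ev s)) / (2*pi)"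
    by (intro divide_right_mono) auto
  thus ?thesis unfolding circ_avg_def by simp
qed

lemma avg_arc:
  assumes A: "A \<in> sets borel" and c: "0 \<le> c" "c < 2*pi" and w: "0 < w" "w \<le> pi"
    and inA: "\<And>s. c - w \<le> s \<Longrightarrow> s \<le> c + w \<Longrightarrow> x - t *\<^sub>R ev s \<in> A"
  shows "circ_avg (indicator A) x t \<ge> w / (2*pi)"
proof -
  have "(min (2*pi) (c+w) - max 0 (c-w)) / (2*pi) \<le> circ_avg (indicator A) x t"
    by (rule avg_ge[OF A]) (use c w inA in auto)
  moreover have "w \<le> min (2*pi) (c+w) - max 0 (c-w)" using c w by auto
  ultimately show ?thesis by (smt (verit) divide_right_mono pi_gt_zero)
qed

lemma sph_max_ge: "t \<in> E \<Longrightarrow> ennreal (circ_avg f x t) \<le> sph_max E f x"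
  unfolding sph_max_def by (rule SUP_upper2[where i=t]) auto



definition kap :: real where "kap = unit_ball_vol 2"

lemma kap_pos: "kap > 0" unfolding kap_def by simp

lemma em_cball: "r \<ge> 0 \<Longrightarrow> emeasure lebesgue (cball (0::real^2) r) = ennreal (kap * r^2)"
  unfolding kap_def by (simp add: emeasure_cball)

lemma em_ball: "r \<ge> 0 \<Longrightarrow> emeasure lebesgue (ball (0::real^2) r) = ennreal (kap * r^2)"
  unfolding kap_def by (simp add: emeasure_ball)

lemma em_cball': "r \<ge> 0 \<Longrightarrow> emeasure lborel (cball (0::real^2) r) = ennreal (kap * r^2)"
  unfolding kap_def by (simp add: emeasure_cball)

lemma em_ball': "r \<ge> 0 \<Longrightarrow> emeasure lborel (ball (0::real^2) r) = ennreal (kap * r^2)"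
  unfolding kap_def by (simp add: emeasure_ball)

lemma em_open_ann:
  assumes "0 \<le> r1" "r1 \<le> r2"
  shows "emeasure lebesgue {x::real^2. r1 < norm x \<and> norm x < r2} = ennreal (kap * (r2^2 - r1^2))"
proof -
  have eq: "{x::real^2. r1 < norm x \<and> norm x < r2} = ball 0 r2 - cball 0 r1" by auto
  have "emeasure lebesgue (ball (0::real^2) r2 - cball 0 r1)
      = emeasure lebesgue (ball (0::real^2) r2) - emeasure lebesgue (cball (0::real^2) r1)"
  proof (cases "r1 = r2")
    case True
    have e: "ball (0::real^2) r2 - cball 0 r2 = {}" by auto
    show ?thesis unfolding True e using assms True by (simp add: em_ball em_cball em_ball' em_cball')
  next
    case False
    show ?thesis
      by (rule emeasure_Diff) (use assms False em_cball em_cball' in \<open>auto simp: subset_iff\<close>)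
  qed
  also have "\<dots> = ennreal (kap * (r2^2 - r1^2))"
    using assms kap_pos by (simp add: em_ball em_cball em_ball' em_cball' ennreal_minus[symmetric] right_diff_distrib power_mono)
  finally show ?thesis using eq by simp
qed

lemma em_closed_ann:
  assumes "0 \<le> r1" "r1 \<le> r2"
  shows "emeasure lebesgue {x::real^2. r1 \<le> norm x \<and> norm x \<le> r2} = ennreal (kap * (r2^2 - r1^2))"
proof -
  have eq: "{x::real^2. r1 \<le> norm x \<and> norm x \<le> r2} = cball 0 r2 - ball 0 r1" by auto
  have "emeasure lebesgue (cball (0::real^2) r2 - ball 0 r1)
      = emeasure lebesgue (cball (0::real^2) r2) - emeasure lebesgue (ball (0::real^2) r1)"
    by (rule emeasure_Diff) (use assms em_ball em_ball' in \<open>auto simp: subset_iff\<close>)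
  also have "\<dots> = ennreal (kap * (r2^2 - r1^2))"
    using assms kap_pos by (simp add: em_ball em_cball em_ball' em_cball' ennreal_minus[symmetric] right_diff_distrib power_mono)
  finally show ?thesis using eq by simp
qed

lemma outer_ge: "T \<in> sets lebesgue \<Longrightarrow> T \<subseteq> S \<Longrightarrow> emeasure lebesgue T \<le> outer_lmeasure S"
  unfolding outer_lmeasure_def by (rule INF_greatest, rule emeasure_mono) auto

lemma outer_le: "A \<in> sets lebesgue \<Longrightarrow> S \<subseteq> A \<Longrightarrow> outer_lmeasure S \<le> emeasure lebesgue A"
  unfolding outer_lmeasure_def by (rule INF_lower) auto

lemma outer_mono: "S \<subseteq> S' \<Longrightarrow> outer_lmeasure S \<le> outer_lmeasure S'"
  unfolding outer_lmeasure_def by (rule INF_mono) auto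

lemma outer_empty: "outer_lmeasure {} = 0"
  using outer_le[of "{}" "{}"] by simp

lemma distf_anti: "s \<le> s' \<Longrightarrow> distf g s' \<le> distf g s"
  unfolding distf_def by (rule outer_mono) (auto intro: le_less_trans ennreal_leI)



lemma epowr_ge:
  assumes "0 \<le> X" "ennreal X \<le> I" "v > 0"
  shows "ennreal (X powr v) \<le> epowr I v"
proof (cases "I = \<infinity>")
  case True thus ?thesis by (simp add: epowr_def)
next
  case False
  have "enn2real (ennreal X) \<le> enn2real I" using assms False
    by (intro enn2real_mono) (auto simp: top.not_eq_extremum)
  hence "X \<le> enn2real I" using assms by simp
  hence "X powr v \<le> enn2real I powr v" using assms by (intro powr_mono2) auto
  thus ?thesis using False by (simp add: epowr_def ennreal_leI)
qed

lemma epowr_le: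
  assumes "0 \<le> X" "I \<le> ennreal X" "v > 0"
  shows "epowr I v \<le> ennreal (X powr v)"
proof -
  have "I < top" by (rule le_less_trans[OF assms(2)]) simp
  hence F: "I \<noteq> \<infinity>" by simp
  have "enn2real I \<le> enn2real (ennreal X)" using assms F
    by (intro enn2real_mono) auto
  hence "enn2real I \<le> X" using assms by simp
  hence "enn2real I powr v \<le> X powr v" using assms by (intro powr_mono2) auto
  thus ?thesis using F by (simp add: epowr_def ennreal_leI)
qed

lemma lp_lower:
  assumes m: "ennreal m \<le> distf g a" "m > 0" and a: "a > 0" and v: "0 \<le> v" "v \<le> 1"
  shows "ennreal (a/2 * m powr v) \<le> lp_norm v g"
proof (cases "v = 0")
  case True
  have "ennreal (a/2) \<le> Inf {ennreal s | s. 0 \<le> s \<and> distf g s = 0}"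
  proof (rule Inf_greatest)
    fix y assume "y \<in> {ennreal s | s. 0 \<le> s \<and> distf g s = 0}"
    then obtain s where s: "y = ennreal s" "0 \<le> s" "distf g s = 0" by auto
    have "a < s"
    proof (rule ccontr)
      assume "\<not> a < s"
      hence "distf g a \<le> distf g s" by (intro distf_anti) auto
      thus False using s m by (metis ennreal_eq_0_iff le_zero_eq not_le)
    qed
    thus "ennreal (a/2) \<le> y" using s a by (auto intro!: ennreal_leI)
  qed
  thus ?thesis using True m by (simp add: lp_norm_def)
next
  case False
  hence vp: "v > 0" using v by auto
  let ?c = "(a/2) powr (1/v - 1) * m"
  have ex: "1/v - 1 \<ge> 0" using vp v by (simp add: field_simps)
  have pt: "ennreal ?c * indicator {a/2<..a} s
      \<le> ennreal ((1 / v) * s powr (1 / v - 1)) * distf g s * indicator {0<..} s" for s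
  proof (cases "s \<in> {a/2<..a}")
    case True
    have "(a/2) powr (1/v - 1) \<le> s powr (1/v - 1)"
      using True a ex by (intro powr_mono2) auto
    also have "\<dots> = 1 * s powr (1/v - 1)" by simp
    also have "\<dots> \<le> (1/v) * s powr (1/v - 1)"
      using vp v by (intro mult_right_mono) (auto simp: field_simps)
    finally have 1: "(a/2) powr (1/v - 1) \<le> (1/v) * s powr (1/v - 1)" .
    have 2: "ennreal m \<le> distf g s" using m(1) distf_anti[of s a g] True by auto
    have "ennreal ?c = ennreal ((a/2) powr (1/v - 1)) * ennreal m"
      using m by (simp add: ennreal_mult)
    also have "\<dots> \<le> ennreal ((1 / v) * s powr (1 / v - 1)) * distf g s"
      using 1 2 by (intro mult_mono) (auto intro: ennreal_leI)
    finally show ?thesis using True a by auto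
  qed auto
  have "ennreal ((a/2) powr (1/v) * m) = ennreal ?c * emeasure lborel {a/2<..a}"
    using a m by (simp add: ennreal_mult[symmetric] powr_diff field_simps)
  also have "\<dots> = (\<integral>\<^sup>+ s. ennreal ?c * indicator {a/2<..a} s \<partial>lborel)"
    by (simp add: nn_integral_cmult_indicator)
  also have "\<dots> \<le> (\<integral>\<^sup>+ s. ennreal ((1 / v) * s powr (1 / v - 1)) * distf g s * indicator {0<..} s \<partial>lborel)"
    by (intro nn_integral_mono pt)
  finally have I: "ennreal ((a/2) powr (1/v) * m) \<le> \<dots>" .
  have "lp_norm v g = epowr (\<integral>\<^sup>+ s. ennreal ((1 / v) * s powr (1 / v - 1)) * distf g s * indicator {0<..} s \<partial>lborel) v"
    unfolding lp_norm_def using False by (rule if_not_P)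
  hence "ennreal (((a/2) powr (1/v) * m) powr v) \<le> lp_norm v g"
    using epowr_ge[OF _ I vp] a m by simp
  moreover have "((a/2) powr (1/v) * m) powr v = a/2 * m powr v"
    using a m vp by (simp add: powr_mult powr_powr)
  ultimately show ?thesis by simp
qed

definition Ku :: "real \<Rightarrow> real" where "Ku u = (if u = 0 then 1 else (1/u) powr u)"

lemma Ku_pos: "Ku u > 0" unfolding Ku_def by auto

lemma distf_ind:
  assumes A: "A \<in> sets lebesgue" "emeasure lebesgue A \<le> ennreal M"
  shows "distf (\<lambda>x. ennreal \<bar>indicator A x :: real\<bar>) s \<le> ennreal M"
    and "s \<ge> 1 \<Longrightarrow> distf (\<lambda>x. ennreal \<bar>indicator A x :: real\<bar>) s = 0"
proof -
  have "{x. ennreal s < ennreal \<bar>indicator A x :: real\<bar>} \<subseteq> A"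
    by (auto simp: indicator_def)
  thus "distf (\<lambda>x. ennreal \<bar>indicator A x :: real\<bar>) s \<le> ennreal M"
    unfolding distf_def using outer_le[OF A(1)] A(2) order.trans by blast
  assume "s \<ge> 1"
  hence "{x. ennreal s < ennreal \<bar>indicator A x :: real\<bar>} = {}"
    by (auto simp: indicator_def ennreal_less_iff)
  thus "distf (\<lambda>x. ennreal \<bar>indicator A x :: real\<bar>) s = 0"
    unfolding distf_def by (simp add: outer_empty)
qed

lemma lp_upper_ind:
  assumes A: "A \<in> sets lebesgue" "emeasure lebesgue A \<le> ennreal M" and M: "M > 0"
    and u: "0 \<le> u" "u \<le> 1"
  shows "lp_norm u (\<lambda>x. ennreal \<bar>indicator A x :: real\<bar>) \<le> ennreal (Ku u * M powr u)"
proof (cases "u = 0")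
  case True
  have "Inf {ennreal s | s. 0 \<le> s \<and> distf (\<lambda>x. ennreal \<bar>indicator A x :: real\<bar>) s = 0} \<le> ennreal 1"
    by (rule Inf_lower) (use distf_ind(2)[OF A, of 1] in auto)
  thus ?thesis using True M by (simp add: lp_norm_def Ku_def)
next
  case False
  hence up: "u > 0" using u by auto
  let ?g = "\<lambda>x. ennreal \<bar>indicator A x :: real\<bar>"
  have pt: "ennreal ((1 / u) * s powr (1 / u - 1)) * distf ?g s * indicator {0<..} s
      \<le> ennreal (M / u) * indicator {0<..<1} s" for s
  proof (cases "0 < s \<and> s < 1")
    case True
    have ex: "1/u - 1 \<ge> 0" using up u by (simp add: field_simps)
    have "s powr (1/u - 1) \<le> 1" using True ex by (intro powr_le1) auto
    hence 1: "(1 / u) * s powr (1 / u - 1) \<le> 1/u" using up by (simp add: divide_right_mono)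
    have "ennreal ((1 / u) * s powr (1 / u - 1)) * distf ?g s \<le> ennreal (1/u) * ennreal M"
      by (intro mult_mono) (use 1 distf_ind(1)[OF A] in \<open>auto intro: ennreal_leI\<close>)
    thus ?thesis using True up M by (simp add: ennreal_mult[symmetric] )
  next
    case False
    thus ?thesis using distf_ind(2)[OF A, of s] by (cases "s \<le> 0") (auto simp: not_le)
  qed
  have "(\<integral>\<^sup>+ s. ennreal ((1 / u) * s powr (1 / u - 1)) * distf ?g s * indicator {0<..} s \<partial>lborel)
      \<le> (\<integral>\<^sup>+ s. ennreal (M / u) * indicator {0<..<1::real} s \<partial>lborel)"
    by (intro nn_integral_mono pt)
  also have "\<dots> = ennreal (M / u)"
    by (simp add: nn_integral_cmult_indicator)
  finally have I: "(\<integral>\<^sup>+ s. ennreal ((1 / u) * s powr (1 / u - 1)) * distf ?g s * indicator {0<..} s \<partial>lborel) \<le> ennreal (M/u)" .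
  have "lp_norm u ?g = epowr (\<integral>\<^sup>+ s. ennreal ((1 / u) * s powr (1 / u - 1)) * distf ?g s * indicator {0<..} s \<partial>lborel) u"
    unfolding lp_norm_def using False by (rule if_not_P)
  hence "lp_norm u ?g \<le> ennreal ((M/u) powr u)"
    using epowr_le[OF _ I up] M up by simp
  moreover have "(M/u) powr u = Ku u * M powr u"
    using False M up by (simp add: Ku_def powr_divide)
  ultimately show ?thesis by simp
qed

lemma lorentz_upper_ind:
  assumes A: "A \<in> sets lebesgue" "emeasure lebesgue A \<le> ennreal M" and M: "M > 0" and p: "p > 0"
  shows "lorentz_p1 p (\<lambda>x. ennreal \<bar>indicator A x :: real\<bar>) \<le> ennreal (p * M powr (1/p))"
proof -
  let ?g = "\<lambda>x. ennreal \<bar>indicator A x :: real\<bar>"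
  have pt: "epowr (distf ?g s) (1 / p) * indicator {0<..} s \<le> ennreal (M powr (1/p)) * indicator {0<..<1} s" for s
  proof (cases "0 < s \<and> s < 1")
    case True
    thus ?thesis using epowr_le[OF _ distf_ind(1)[OF A, of s], of "1/p"] M p by auto
  next
    case False
    thus ?thesis using distf_ind(2)[OF A, of s]
      by (cases "s \<le> 0") (auto simp: not_le epowr_def)
  qed
  have "(\<integral>\<^sup>+ s. epowr (distf ?g s) (1 / p) * indicator {0<..} s \<partial>lborel)
      \<le> (\<integral>\<^sup>+ s. ennreal (M powr (1/p)) * indicator {0<..<1::real} s \<partial>lborel)"
    apply (rule nn_integral_mono) apply (rule pt) done
  also have "\<dots> = ennreal (M powr (1/p))"
    by (simp add: nn_integral_cmult_indicator)
  finally have "(\<integral>\<^sup>+ s. epowr (distf ?g s) (1 / p) * indicator {0<..} s \<partial>lborel) \<le> ennreal (M powr (1/p))" .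
  hence "ennreal p * (\<integral>\<^sup>+ s. epowr (distf ?g s) (1 / p) * indicator {0<..} s \<partial>lborel)
      \<le> ennreal p * ennreal (M powr (1/p))" by (rule mult_left_mono) simp
  also have "\<dots> = ennreal (p * M powr (1/p))" using p by (simp add: ennreal_mult)
  finally show ?thesis unfolding lorentz_p1_def .
qed

lemma weak_lower:
  assumes "ennreal m \<le> distf g a" "m > 0" "a > 0" "q > 0"
  shows "ennreal (a * m powr (1/q)) \<le> weak_norm q g"
proof -
  have "ennreal (a * m powr (1/q)) = ennreal a * ennreal (m powr (1/q))"
    using assms by (simp add: ennreal_mult)
  also have "\<dots> \<le> ennreal a * epowr (distf g a) (1/q)"
    using epowr_ge[OF _ assms(1), of "1/q"] assms by (intro mult_left_mono) auto
  also have "\<dots> \<le> weak_norm q g"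
    unfolding weak_norm_def using assms by (intro SUP_upper2[where i=a]) auto
  finally show ?thesis .
qed



definition rset :: "real set \<Rightarrow> (real^2) set" where "rset S = {x. norm x \<in> S}"

lemma rset_borel: "S \<in> sets borel \<Longrightarrow> rset S \<in> sets borel"
proof -
  assume S: "S \<in> sets borel"
  have "(norm :: real^2 \<Rightarrow> real) \<in> borel_measurable borel" by (rule borel_measurable_norm)
  hence "norm -` S \<inter> space borel \<in> sets (borel :: (real^2) measure)"
    using S by (rule measurable_sets)
  thus ?thesis by (simp add: rset_def vimage_def)
qed

lemma rset_leb: "S \<in> sets borel \<Longrightarrow> rset S \<in> sets lebesgue"
  using rset_borel by (metis sets_completionI_sets sets_lborel)

lemma rset_meas: "S \<in> sets borel \<Longrightarrow> (indicator (rset S) :: real^2 \<Rightarrow> real) \<in> borel_measurable borel"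
  using rset_borel by (rule borel_measurable_indicator)

lemma rset_radial: "radial (indicator (rset S) :: real^2 \<Rightarrow> real)"
  unfolding radial_def rset_def by (intro exI[of _ "indicator S"]) (simp add: indicator_def)

lemma level_set:
  assumes "a > 0" "T \<subseteq> {x. \<exists>t\<in>E. a \<le> circ_avg f x t}"
  shows "T \<subseteq> {x. ennreal (a/2) < sph_max E f x}"
proof
  fix x assume "x \<in> T"
  then obtain t where t: "t \<in> E" "a \<le> circ_avg f x t" using assms by auto
  have "ennreal (a/2) < ennreal a" using assms by (simp add: ennreal_lessI)
  also have "\<dots> \<le> ennreal (circ_avg f x t)" using t by (intro ennreal_leI)
  also have "\<dots> \<le> sph_max E f x" by (rule sph_max_ge[OF t(1)])
  finally show "x \<in> {x. ennreal (a/2) < sph_max E f x}" by simp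
qed

lemma Trad_ineq:
  assumes "(u,v) \<in> T_rad E"
  obtains K where "K > 0" and "\<And>S a m M T. S \<in> sets borel \<Longrightarrow> emeasure lebesgue (rset S) \<le> ennreal M
     \<Longrightarrow> M > 0 \<Longrightarrow> T \<in> sets lebesgue \<Longrightarrow> ennreal m \<le> emeasure lebesgue T \<Longrightarrow> m > 0 \<Longrightarrow> a > 0
     \<Longrightarrow> T \<subseteq> {x. \<exists>t\<in>E. a \<le> circ_avg (indicator (rset S)) x t} \<Longrightarrow> a * m powr v \<le> K * M powr u"
proof -
  from assms obtain C where uv: "0 \<le> u" "u \<le> 1" "0 \<le> v" "v \<le> 1" and
    C: "\<And>f. f \<in> borel_measurable borel \<and> radial f \<and> lp_norm u (\<lambda>x. ennreal \<bar>f x\<bar>) < \<infinity> \<longrightarrow>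
        lp_norm v (sph_max E f) \<le> ennreal C * lp_norm u (\<lambda>x. ennreal \<bar>f x\<bar>)"
    unfolding T_rad_def by auto
  define C' where "C' = max C 0"
  have "C' \<ge> 0" by (simp add: C'_def)
  hence "0 \<le> C' * Ku u" using Ku_pos[of u] by simp
  hence K: "4 * (C' * Ku u) + 1 > 0" by linarith
  show ?thesis
  proof (rule that[OF K])
    fix S a m M T
    assume S: "S \<in> sets borel" and M: "emeasure lebesgue (rset S) \<le> ennreal M" "M > 0"
      and T: "T \<in> sets lebesgue" "ennreal m \<le> emeasure lebesgue T" and m: "m > 0" and a: "a > 0"
      and sub: "T \<subseteq> {x. \<exists>t\<in>E. a \<le> circ_avg (indicator (rset S)) x t}"
    let ?f = "indicator (rset S) :: real^2 \<Rightarrow> real"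
    have up: "lp_norm u (\<lambda>x. ennreal \<bar>?f x\<bar>) \<le> ennreal (Ku u * M powr u)"
      by (rule lp_upper_ind[OF rset_leb[OF S] M uv(1,2)])
    hence fin: "lp_norm u (\<lambda>x. ennreal \<bar>?f x\<bar>) < \<infinity>"
      using le_less_trans[OF up] by simp
    have bd: "lp_norm v (sph_max E ?f) \<le> ennreal C * lp_norm u (\<lambda>x. ennreal \<bar>?f x\<bar>)"
      using C[of ?f] rset_meas[OF S] rset_radial fin by blast
    have "ennreal m \<le> emeasure lebesgue T" by (rule T(2))
    also have "\<dots> \<le> distf (sph_max E ?f) (a/2)"
      unfolding distf_def by (rule outer_ge[OF T(1) level_set[OF a sub]])
    finally have dm: "ennreal m \<le> distf (sph_max E ?f) (a/2)" .
    have "ennreal (a/2/2 * m powr v) \<le> lp_norm v (sph_max E ?f)"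
      by (rule lp_lower[OF dm m _ uv(3,4)]) (use a in simp)
    also have "\<dots> \<le> ennreal C * lp_norm u (\<lambda>x. ennreal \<bar>?f x\<bar>)" by (rule bd)
    also have "\<dots> \<le> ennreal C' * ennreal (Ku u * M powr u)"
      by (rule mult_mono[OF ennreal_leI up]) (auto simp: C'_def)
    also have "\<dots> = ennreal (C' * (Ku u * M powr u))"
      using Ku_pos[of u] by (simp add: ennreal_mult C'_def)
    finally have fi: "ennreal (a/2/2 * m powr v) \<le> ennreal (C' * (Ku u * M powr u))" .
    have nn: "0 \<le> C' * (Ku u * M powr u)" using Ku_pos[of u] by (simp add: C'_def)
    have "a/2/2 * m powr v \<le> C' * (Ku u * M powr u)" using fi ennreal_le_iff[OF nn] by blast
    hence "a * m powr v \<le> 4 * (C' * Ku u) * M powr u" by (simp add: field_simps)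
    also have "\<dots> \<le> (4 * (C' * Ku u) + 1) * M powr u" by (intro mult_right_mono) auto
    finally show "a * m powr v \<le> (4 * (C' * Ku u) + 1) * M powr u" .
  qed
qed

lemma Weak_ineq:
  assumes "rad_restricted_weak E p q" "p > 0" "q > 0"
  obtains K where "K > 0" and "\<And>S a m M T. S \<in> sets borel \<Longrightarrow> emeasure lebesgue (rset S) \<le> ennreal M
     \<Longrightarrow> M > 0 \<Longrightarrow> T \<in> sets lebesgue \<Longrightarrow> ennreal m \<le> emeasure lebesgue T \<Longrightarrow> m > 0 \<Longrightarrow> a > 0
     \<Longrightarrow> T \<subseteq> {x. \<exists>t\<in>E. a \<le> circ_avg (indicator (rset S)) x t} \<Longrightarrow> a * m powr (1/q) \<le> K * M powr (1/p)"
proof -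
  from assms obtain C where
    C: "\<And>f. f \<in> borel_measurable borel \<and> radial f \<and> lorentz_p1 p (\<lambda>x. ennreal \<bar>f x\<bar>) < \<infinity> \<longrightarrow>
        weak_norm q (sph_max E f) \<le> ennreal C * lorentz_p1 p (\<lambda>x. ennreal \<bar>f x\<bar>)"
    unfolding rad_restricted_weak_def by auto
  define C' where "C' = max C 0"
  have "C' \<ge> 0" by (simp add: C'_def)
  hence "0 \<le> C' * p" using assms by simp
  hence K: "2 * (C' * p) + 1 > 0" by linarith
  show ?thesis
  proof (rule that[OF K])
    fix S a m M T
    assume S: "S \<in> sets borel" and M: "emeasure lebesgue (rset S) \<le> ennreal M" "M > 0"
      and T: "T \<in> sets lebesgue" "ennreal m \<le> emeasure lebesgue T" and m: "m > 0" and a: "a > 0"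
      and sub: "T \<subseteq> {x. \<exists>t\<in>E. a \<le> circ_avg (indicator (rset S)) x t}"
    let ?f = "indicator (rset S) :: real^2 \<Rightarrow> real"
    have up: "lorentz_p1 p (\<lambda>x. ennreal \<bar>?f x\<bar>) \<le> ennreal (p * M powr (1/p))"
      by (rule lorentz_upper_ind[OF rset_leb[OF S] M assms(2)])
    hence fin: "lorentz_p1 p (\<lambda>x. ennreal \<bar>?f x\<bar>) < \<infinity>"
      using le_less_trans[OF up] by simp
    have bd: "weak_norm q (sph_max E ?f) \<le> ennreal C * lorentz_p1 p (\<lambda>x. ennreal \<bar>?f x\<bar>)"
      using C[of ?f] rset_meas[OF S] rset_radial fin by blast
    have "ennreal m \<le> emeasure lebesgue T" by (rule T(2))
    also have "\<dots> \<le> distf (sph_max E ?f) (a/2)"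
      unfolding distf_def by (rule outer_ge[OF T(1) level_set[OF a sub]])
    finally have dm: "ennreal m \<le> distf (sph_max E ?f) (a/2)" .
    have "ennreal (a/2 * m powr (1/q)) \<le> weak_norm q (sph_max E ?f)"
      by (rule weak_lower[OF dm m _ assms(3)]) (use a in simp)
    also have "\<dots> \<le> ennreal C * lorentz_p1 p (\<lambda>x. ennreal \<bar>?f x\<bar>)" by (rule bd)
    also have "\<dots> \<le> ennreal C' * ennreal (p * M powr (1/p))"
      by (rule mult_mono[OF ennreal_leI up]) (auto simp: C'_def)
    also have "\<dots> = ennreal (C' * (p * M powr (1/p)))"
      using assms by (simp add: ennreal_mult C'_def)
    finally have fi: "ennreal (a/2 * m powr (1/q)) \<le> ennreal (C' * (p * M powr (1/p)))" .
    have nn: "0 \<le> C' * (p * M powr (1/p))" using assms by (simp add: C'_def)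
    have "a/2 * m powr (1/q) \<le> C' * (p * M powr (1/p))" using fi ennreal_le_iff[OF nn] by blast
    hence "a * m powr (1/q) \<le> 2 * (C' * p) * M powr (1/p)" by (simp add: field_simps)
    also have "\<dots> \<le> (2 * (C' * p) + 1) * M powr (1/p)" by (intro mult_right_mono) auto
    finally show "a * m powr (1/q) \<le> (2 * (C' * p) + 1) * M powr (1/p)" .
  qed
qed



definition sep :: "real \<Rightarrow> real set \<Rightarrow> bool" where
  "sep d P \<longleftrightarrow> (\<forall>p\<in>P. \<forall>q\<in>P. p \<noteq> q \<longrightarrow> d \<le> \<bar>p - q\<bar>)"

lemma sep_card:
  assumes "finite P" "P \<subseteq> {x0..x0+L}" "sep d P" "d > 0" "L \<ge> 0"
  shows "real (card P) * d \<le> L + d"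
proof -
  let ?I = "\<lambda>p. {p..<p+d}"
  have disj: "disjoint_family_on ?I P"
    unfolding disjoint_family_on_def
  proof (intro ballI impI)
    fix p q assume pq: "p \<in> P" "q \<in> P" "p \<noteq> q"
    hence "d \<le> \<bar>p - q\<bar>" using assms(3) unfolding sep_def by auto
    thus "?I p \<inter> ?I q = {}" by auto
  qed
  have "ennreal (real (card P) * d) = (\<Sum>p\<in>P. emeasure lborel (?I p))"
    using assms(4) by (simp add: ennreal_of_nat_eq_real_of_nat ennreal_mult)
  also have "\<dots> = emeasure lborel (\<Union>p\<in>P. ?I p)"
    by (rule sum_emeasure) (use disj assms(1) in auto)
  also have "\<dots> \<le> emeasure lborel {x0..x0+L+d}"
    by (rule emeasure_mono) (use assms(2) in auto)
  also have "\<dots> = ennreal (L + d)" using assms by simp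
  finally show ?thesis using assms by (subst (asm) ennreal_le_iff) auto
qed

lemma cover_num_le:
  assumes "finite C" "F \<subseteq> (\<Union>c\<in>C. {c..c+a})"
  shows "cover_num F a \<le> card C"
  unfolding cover_num_def by (rule cInf_lower) (use assms in auto)

lemma pack:
  assumes F: "F \<subseteq> {x0..x0+L}" and d: "d > 0" and L: "L \<ge> 0"
  obtains P where "finite P" "P \<subseteq> F" "sep d P" "real (card P) * d \<le> L + d"
    "cover_num F d \<le> 2 * card P"
proof -
  define PP where "PP = {P. finite P \<and> P \<subseteq> F \<and> sep d P}"
  define B where "B = nat \<lceil>(L + d) / d\<rceil>"
  have bd: "card P \<le> B" if "P \<in> PP" for P
  proof -
    have P: "finite P" "P \<subseteq> F" "sep d P" using that unfolding PP_def by auto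
    have "real (card P) * d \<le> L + d"
      by (rule sep_card[OF P(1) order.trans[OF P(2) F] P(3) d L])
    hence "real (card P) \<le> (L + d) / d" using d by (simp add: field_simps)
    hence "real (card P) \<le> real_of_int \<lceil>(L + d) / d\<rceil>" by (meson le_of_int_ceiling order.trans)
    hence "int (card P) \<le> \<lceil>(L + d) / d\<rceil>" by linarith
    thus ?thesis unfolding B_def by linarith
  qed
  have emp: "{} \<in> PP" unfolding PP_def sep_def by auto
  have "card ` PP \<subseteq> {..B}" using bd by blast
  hence fin: "finite (card ` PP)" by (rule finite_subset) simp
  have "Max (card ` PP) \<in> card ` PP" using Max_in[OF fin] emp by blast
  then obtain P where P: "P \<in> PP" "card P = Max (card ` PP)" by (metis imageE)
  have maxc: "card Q \<le> card P" if "Q \<in> PP" for Q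
    using P(2) Max_ge[OF fin, of "card Q"] that by simp
  have near: "\<exists>p\<in>P. \<bar>y - p\<bar> < d" if y: "y \<in> F" for y
  proof (rule ccontr)
    assume "\<not> ?thesis"
    hence far: "\<forall>p\<in>P. d \<le> \<bar>y - p\<bar>" by auto
    hence yn: "y \<notin> P" using d by force
    have P1: "finite P" "P \<subseteq> F" "sep d P" using P(1) unfolding PP_def by auto
    have "sep d (insert y P)" unfolding sep_def
    proof (intro ballI impI)
      fix p q assume pq: "p \<in> insert y P" "q \<in> insert y P" "p \<noteq> q"
      show "d \<le> \<bar>p - q\<bar>"
      proof (cases "p = y")
        case True
        hence "q \<in> P" using pq by auto
        thus ?thesis using far True by auto
      next
        case False
        hence p: "p \<in> P" using pq by auto
        show ?thesis
        proof (cases "q = y")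
          case True thus ?thesis using far p by (metis abs_minus_commute)
        next
          case False thus ?thesis using p pq P1(3) unfolding sep_def by auto
        qed
      qed
    qed
    hence "insert y P \<in> PP" using P1 y unfolding PP_def by auto
    hence "card (insert y P) \<le> card P" by (rule maxc)
    thus False using yn P(1) unfolding PP_def by auto
  qed
  have Pf: "finite P" "P \<subseteq> F" "sep d P" using P(1) unfolding PP_def by auto
  define C where "C = P \<union> (\<lambda>p. p - d) ` P"
  have "F \<subseteq> (\<Union>c\<in>C. {c..c+d})"
  proof
    fix y assume "y \<in> F"
    then obtain p where p: "p \<in> P" "\<bar>y - p\<bar> < d" using near by blast
    show "y \<in> (\<Union>c\<in>C. {c..c+d})"
    proof (cases "y \<le> p")
      case True
      hence "y \<in> {p - d..p - d + d}" using p by auto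
      thus ?thesis using p unfolding C_def by blast
    next
      case False
      hence "y \<in> {p..p+d}" using p by auto
      thus ?thesis using p unfolding C_def by blast
    qed
  qed
  hence "cover_num F d \<le> card C" using Pf by (intro cover_num_le) (auto simp: C_def)
  also have "card C \<le> card P + card ((\<lambda>p. p - d) ` P)" unfolding C_def by (rule card_Un_le)
  also have "\<dots> \<le> 2 * card P" using card_image_le[OF Pf(1), of "\<lambda>p. p - d"] by simp
  finally have cv: "cover_num F d \<le> 2 * card P" .
  show ?thesis
    by (rule that[OF Pf _ cv], rule sep_card[OF Pf(1) _ Pf(3) d L]) (use Pf(2) F in auto)
qed

lemma cover_num_bound:
  assumes F: "F \<subseteq> {x0..x0+L}" and d: "d > 0" and L: "L \<ge> 0"
  shows "real (cover_num F d) \<le> 2 * (L + d) / d"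
proof -
  obtain P where P0: "finite P" "P \<subseteq> F" "sep d P" and P: "real (card P) * d \<le> L + d" "cover_num F d \<le> 2 * card P"
    by (rule pack[OF F d L])
  have "real (cover_num F d) \<le> 2 * real (card P)" using P(2) by linarith
  also have "\<dots> \<le> 2 * (L + d) / d" using P(1) d by (simp add: field_simps)
  finally show ?thesis .
qed

lemma many_points:
  assumes F: "F \<subseteq> {x0..x0+L}" and d: "d > 0" and L: "L \<ge> 0" and X: "real (cover_num F d) > X"
  obtains P where "finite P" "P \<subseteq> F" "sep d P" "real (card P) > X / 2"
proof -
  obtain P where P: "finite P" "P \<subseteq> F" "sep d P" and P5: "real (card P) * d \<le> L + d" and P4: "cover_num F d \<le> 2 * card P"
    by (rule pack[OF F d L])
  have "real (card P) > X / 2" using P4 X by linarith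
  thus ?thesis by (rule that[OF P])
qed



lemma xcos: "(x::real^2)$1 = r * cos c \<Longrightarrow> x$2 = r * sin c \<Longrightarrow> x$1 * cos s + x$2 * sin s = r * cos (s - c)"
  by (simp add: cos_diff algebra_simps)

lemma disc_avg:
  assumes t: "1 \<le> t" "t \<le> 2" and d: "0 < d" "d \<le> 1/2" and x: "\<bar>norm x - t\<bar> < d/2"
  shows "circ_avg (indicator (rset {..d})) x t \<ge> d / (8*pi)"
proof -
  define r where "r = norm x"
  have r: "r > 1/2" "r \<le> 3" using t d x unfolding r_def abs_less_iff by linarith+
  hence "x \<noteq> 0" unfolding r_def by auto
  then obtain c where c: "0 \<le> c" "c < 2*pi" "x$1 = r * cos c" "x$2 = r * sin c"
    unfolding r_def by (rule polar2)
  define w where "w = d/4"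
  have w: "0 < w" "w \<le> pi" using d pi_gt3 unfolding w_def by auto
  have "d / 4 / (2*pi) \<le> circ_avg (indicator (rset {..d})) x t"
    unfolding w_def[symmetric]
  proof (rule avg_arc[OF _ c(1,2) w])
    show "rset {..d} \<in> sets borel" by (rule rset_borel) simp
    fix s assume s: "c - w \<le> s" "s \<le> c + w"
    have "(s - c)^2 \<le> w^2" using s w by (intro power2_le_iff_abs_le[THEN iffD2]) auto
    hence cs: "1 - cos (s - c) \<le> w^2 / 2" using one_minus_cos[of "s - c"] by linarith
    have xc: "x$1 * cos s + x$2 * sin s = r * cos (s - c)" by (rule xcos[OF c(3,4)])
    have "(norm (x - t *\<^sub>R ev s))^2 = (norm x)^2 + t^2 - 2*t*(x$1 * cos s + x$2 * sin s)"
      by (rule dist_ev)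
    also have "\<dots> = r^2 + t^2 - 2*t*(r * cos (s - c))" unfolding xc r_def ..
    finally have eq: "(norm (x - t *\<^sub>R ev s))^2 = (r - t)^2 + 2 * (t * r) * (1 - cos (s - c))"
      by (simp add: power2_eq_square algebra_simps)
    have "t * r \<le> 2 * 3" using t r by (intro mult_mono) auto
    hence tr: "0 \<le> t * r" "t * r \<le> 6" using t r by auto
    have "2 * (t * r) * (1 - cos (s - c)) \<le> 2 * 6 * (w^2 / 2)"
      using tr cs by (intro mult_mono) auto
    moreover have "(r - t)^2 \<le> (d/2)^2" using x unfolding r_def[symmetric]
      by (intro power2_le_iff_abs_le[THEN iffD2]) (use d in auto)
    ultimately have "(norm (x - t *\<^sub>R ev s))^2 \<le> (d/2)^2 + 6 * w^2" unfolding eq by linarith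
    also have "\<dots> \<le> d^2" unfolding w_def by (simp add: power2_eq_square field_simps)
    finally have "norm (x - t *\<^sub>R ev s) \<le> d" using d by (simp add: power2_le_iff_abs_le)
    thus "x - t *\<^sub>R ev s \<in> rset {..d}" unfolding rset_def by simp
  qed
  thus ?thesis by (simp add: field_simps)
qed

lemma tang_avg:
  assumes t: "1 \<le> t" "t \<le> 2" and d: "0 < d" "d \<le> R/2" and R: "R \<le> 1" and rho: "1 \<le> rho"
    and x: "\<bar>norm x + t - rho\<bar> < d/2" "norm x \<le> 3 * R" "norm x > 0"
  shows "circ_avg (indicator (rset {rho - d..rho + d})) x t \<ge> sqrt (d / (12*R)) / (2*pi)"
proof -
  define r where "r = norm x"
  have Rp: "R > 0" using d by auto
  have r: "r > 0" "r \<le> 3 * R" using x unfolding r_def by auto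
  hence "x \<noteq> 0" unfolding r_def by auto
  then obtain c where c: "0 \<le> c" "c < 2*pi" "x$1 = r * cos c" "x$2 = r * sin c"
    unfolding r_def by (rule polar2)
  define c' where "c' = (if c < pi then c + pi else c - pi)"
  have c': "0 \<le> c'" "c' < 2*pi" using c unfolding c'_def by auto
  have cc: "cos (s - c) = - cos (s - c')" for s
  proof (cases "c < pi")
    case True
    have "s - c = (s - c') + pi" unfolding c'_def using True by simp
    thus ?thesis by (simp only: cos_periodic_pi)
  next
    case False
    have "s - c = (s - c') - pi" unfolding c'_def using False by simp
    thus ?thesis by (simp only: cos_minus_pi)
  qed
  define w where "w = sqrt (d / (12*R))"
  have w2: "w^2 = d / (12*R)" unfolding w_def using d Rp by simp
  have w1: "w \<le> 1" unfolding w_def using d Rp by (simp add: field_simps)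
  have w0: "0 < w" unfolding w_def using d Rp by simp
  have w: "0 < w" "w \<le> pi" using w0 w1 pi_gt3 by auto
  have "w / (2*pi) \<le> circ_avg (indicator (rset {rho - d..rho + d})) x t"
  proof (rule avg_arc[OF _ c'(1,2) w])
    show "rset {rho - d..rho + d} \<in> sets borel" by (rule rset_borel) simp
    fix s assume s: "c' - w \<le> s" "s \<le> c' + w"
    have "(s - c')^2 \<le> w^2" using s w by (intro power2_le_iff_abs_le[THEN iffD2]) auto
    hence cs: "1 - cos (s - c') \<le> w^2 / 2" using one_minus_cos[of "s - c'"] by linarith
    have cs0: "0 \<le> 1 - cos (s - c')" by simp
    have xc: "x$1 * cos s + x$2 * sin s = r * cos (s - c)" by (rule xcos[OF c(3,4)])
    have "(norm (x - t *\<^sub>R ev s))^2 = (norm x)^2 + t^2 - 2*t*(x$1 * cos s + x$2 * sin s)"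
      by (rule dist_ev)
    also have "\<dots> = r^2 + t^2 - 2*t*(r * cos (s - c))" unfolding xc r_def ..
    also have "\<dots> = r^2 + t^2 + 2*t*(r * cos (s - c'))" unfolding cc[of s] by simp
    finally have eq: "(norm (x - t *\<^sub>R ev s))^2 = (r + t)^2 - 2 * (t * r) * (1 - cos (s - c'))"
      by (simp add: power2_eq_square algebra_simps)
    have "t * r \<le> 2 * (3 * R)" using t r by (intro mult_mono) auto
    hence tr: "0 \<le> t * r" "t * r \<le> 2 * (3 * R)" using t r by auto
    have "2 * (t * r) * (1 - cos (s - c')) \<le> 2 * (2 * (3 * R)) * (w^2 / 2)"
      by (rule mult_mono) (use tr cs cs0 in \<open>auto simp: mult.commute\<close>)
    also have "\<dots> = d / 2" unfolding w2 using Rp by (simp add: field_simps)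
    finally have A: "2 * (t * r) * (1 - cos (s - c')) \<le> d / 2" .
    have B: "0 \<le> 2 * (t * r) * (1 - cos (s - c'))" using tr cs0 by simp
    have rt: "rho - d/2 < r + t" "r + t < rho + d/2" using x(1) unfolding r_def abs_less_iff by linarith+
    have l1: "(rho - d)^2 \<le> (rho - d/2)^2 - d/2"
    proof -
      have "4 + d*6 \<le> rho*8" using d R rho by linarith
      hence "d * (4 + d*6) \<le> d * (rho*8)" using d by (intro mult_left_mono) auto
      thus ?thesis by (simp add: power2_eq_square field_simps)
    qed
    have l2: "(rho - d/2)^2 \<le> (r + t)^2"
      by (rule power_mono) (use rt d R rho in linarith)+
    have lo: "(rho - d)^2 \<le> (norm (x - t *\<^sub>R ev s))^2" using l1 l2 A unfolding eq by linarith
    have l3: "(r + t)^2 \<le> (rho + d)^2"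
      by (rule power_mono) (use rt r t d in linarith)+
    have hi: "(norm (x - t *\<^sub>R ev s))^2 \<le> (rho + d)^2" using l3 B unfolding eq by linarith
    have "rho - d \<le> norm (x - t *\<^sub>R ev s)"
      by (rule power2_le_imp_le[OF lo]) simp
    moreover have "norm (x - t *\<^sub>R ev s) \<le> rho + d"
      by (rule power2_le_imp_le[OF hi]) (use d R rho in linarith)
    ultimately show "x - t *\<^sub>R ev s \<in> rset {rho - d..rho + d}" unfolding rset_def by simp
  qed
  thus ?thesis unfolding w_def .
qed



definition good :: "real set \<Rightarrow> real \<Rightarrow> real \<Rightarrow> bool" where
  "good E u v \<longleftrightarrow> (\<exists>K>0. \<forall>S a m M T. S \<in> sets borel \<longrightarrow> emeasure lebesgue (rset S) \<le> ennreal M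
     \<longrightarrow> M > 0 \<longrightarrow> T \<in> sets lebesgue \<longrightarrow> ennreal m \<le> emeasure lebesgue T \<longrightarrow> m > 0 \<longrightarrow> a > 0
     \<longrightarrow> T \<subseteq> {x. \<exists>t\<in>E. a \<le> circ_avg (indicator (rset S)) x t} \<longrightarrow> a * m powr v \<le> K * M powr u)"

lemma good_Trad: "(u,v) \<in> T_rad E \<Longrightarrow> good E u v"
  unfolding good_def by (erule Trad_ineq) blast

lemma good_weak: "rad_restricted_weak E p q \<Longrightarrow> p > 0 \<Longrightarrow> q > 0 \<Longrightarrow> good E (1/p) (1/q)"
  unfolding good_def by (erule Weak_ineq) blast+

lemma ann_union:
  assumes P: "finite P" "\<And>p q. p \<in> P \<Longrightarrow> q \<in> P \<Longrightarrow> p \<noteq> q \<Longrightarrow> d \<le> \<bar>rr p - rr q\<bar>"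
    and r0: "\<And>p. p \<in> P \<Longrightarrow> r0 \<le> rr p" "d/2 \<le> r0" and d: "d > 0"
  shows "ennreal (real (card P) * (2 * kap * r0 * d)) \<le> emeasure lebesgue (\<Union>p\<in>P. rset {rr p - d/2<..<rr p + d/2})"
proof -
  let ?A = "\<lambda>p. rset {rr p - d/2<..<rr p + d/2}"
  have meas: "?A ` P \<subseteq> sets lebesgue" using rset_leb by auto
  have disj: "disjoint_family_on ?A P"
    unfolding disjoint_family_on_def
  proof (intro ballI impI)
    fix p q assume pq: "p \<in> P" "q \<in> P" "p \<noteq> q"
    hence "d \<le> \<bar>rr p - rr q\<bar>" using P(2) by auto
    thus "?A p \<inter> ?A q = {}" unfolding rset_def by auto
  qed
  have each: "ennreal (2 * kap * r0 * d) \<le> emeasure lebesgue (?A p)" if p: "p \<in> P" for p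
  proof -
    have eq: "?A p = {x::real^2. rr p - d/2 < norm x \<and> norm x < rr p + d/2}" unfolding rset_def by auto
    have "emeasure lebesgue (?A p) = ennreal (kap * ((rr p + d/2)^2 - (rr p - d/2)^2))"
      unfolding eq by (rule em_open_ann) (use r0(1)[OF p] r0(2) d in auto)
    also have "kap * ((rr p + d/2)^2 - (rr p - d/2)^2) = 2 * kap * rr p * d"
      by (simp add: power2_eq_square algebra_simps)
    finally show ?thesis using r0(1)[OF p] kap_pos d by (auto intro!: ennreal_leI)
  qed
  have "ennreal (real (card P) * (2 * kap * r0 * d)) = (\<Sum>p\<in>P. ennreal (2 * kap * r0 * d))"
    using kap_pos d r0 by (simp add: ennreal_mult ennreal_of_nat_eq_real_of_nat)
  also have "\<dots> \<le> (\<Sum>p\<in>P. emeasure lebesgue (?A p))" by (intro sum_mono each)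
  also have "\<dots> = emeasure lebesgue (\<Union>p\<in>P. ?A p)" by (rule sum_emeasure[OF meas disj P(1)])
  finally show ?thesis .
qed

lemma good_K: "good E u v \<Longrightarrow> (\<And>K. K > 0 \<Longrightarrow> (\<And>S a m M T. S \<in> sets borel \<Longrightarrow> emeasure lebesgue (rset S) \<le> ennreal M
     \<Longrightarrow> M > 0 \<Longrightarrow> T \<in> sets lebesgue \<Longrightarrow> ennreal m \<le> emeasure lebesgue T \<Longrightarrow> m > 0 \<Longrightarrow> a > 0
     \<Longrightarrow> T \<subseteq> {x. \<exists>t\<in>E. a \<le> circ_avg (indicator (rset S)) x t} \<Longrightarrow> a * m powr v \<le> K * M powr u) \<Longrightarrow> thesis) \<Longrightarrow> thesis"
  unfolding good_def by blast

lemma disc_ineq: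
  assumes g: "good E u v" and E: "E \<subseteq> {1..2}" and v: "v \<ge> 0"
  obtains K where "K > 0" "\<And>d P. 0 < d \<Longrightarrow> d \<le> 1/2 \<Longrightarrow> finite P \<Longrightarrow> P \<noteq> {} \<Longrightarrow> P \<subseteq> E \<Longrightarrow> sep d P \<Longrightarrow>
      d * (real (card P) * d) powr v \<le> K * (d^2) powr u"
proof -
  obtain K where K: "K > 0" and KK: "\<And>S a m M T. S \<in> sets borel \<Longrightarrow> emeasure lebesgue (rset S) \<le> ennreal M
     \<Longrightarrow> M > 0 \<Longrightarrow> T \<in> sets lebesgue \<Longrightarrow> ennreal m \<le> emeasure lebesgue T \<Longrightarrow> m > 0 \<Longrightarrow> a > 0
     \<Longrightarrow> T \<subseteq> {x. \<exists>t\<in>E. a \<le> circ_avg (indicator (rset S)) x t} \<Longrightarrow> a * m powr v \<le> K * M powr u"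
    using good_K[OF g] by blast
  define K' where "K' = K * kap powr u * (8 * pi) / (2 * kap) powr v"
  have K': "K' > 0" unfolding K'_def using K kap_pos by simp
  show ?thesis
  proof (rule that[OF K'])
    fix d P assume d: "0 < d" "d \<le> 1/2" and P: "finite P" "P \<noteq> {}" "P \<subseteq> E" "sep d P"
    have cP: "real (card P) > 0" using P by auto
    let ?T = "\<Union>p\<in>P. rset {p - d/2<..<p + d/2}"
    have Tm: "ennreal (real (card P) * (2 * kap * 1 * d)) \<le> emeasure lebesgue ?T"
      by (rule ann_union[OF P(1), where rr="\<lambda>p. p"]) (use P(3,4) E d in \<open>auto simp: sep_def\<close>)
    have Tl: "?T \<in> sets lebesgue" using rset_leb P(1) by auto
    have rs: "rset {..d} = cball (0::real^2) d" unfolding rset_def by auto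
    have Mm: "emeasure lebesgue (rset {..d}) \<le> ennreal (kap * d^2)"
      unfolding rs using d by (simp add: em_cball em_cball')
    have sub: "?T \<subseteq> {x. \<exists>t\<in>E. d / (8*pi) \<le> circ_avg (indicator (rset {..d})) x t}"
    proof
      fix x assume "x \<in> ?T"
      then obtain p where p: "p \<in> P" "p - d/2 < norm x" "norm x < p + d/2" unfolding rset_def by auto
      have pE: "p \<in> E" "1 \<le> p" "p \<le> 2" using p P E by auto
      have "\<bar>norm x - p\<bar> < d/2" using p(2,3) unfolding abs_less_iff by linarith
      thus "x \<in> {x. \<exists>t\<in>E. d / (8*pi) \<le> circ_avg (indicator (rset {..d})) x t}"
        using disc_avg[OF pE(2,3) d] pE(1) by auto
    qed
    have main: "d / (8*pi) * (real (card P) * (2 * kap * 1 * d)) powr v \<le> K * (kap * d^2) powr u"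
      by (rule KK[OF _ Mm _ Tl Tm _ _ sub]) (use d kap_pos cP in auto)
    have e1: "(real (card P) * (2 * kap * 1 * d)) powr v = (2*kap) powr v * (real (card P) * d) powr v"
      using kap_pos d cP by (simp add: powr_mult[symmetric] mult_ac)
    have e2: "(kap * d^2) powr u = kap powr u * (d^2) powr u"
      using kap_pos d by (simp add: powr_mult)
    have "d * (real (card P) * d) powr v * ((2*kap) powr v / (8*pi))
        \<le> K * kap powr u * (d^2) powr u"
      using main unfolding e1 e2 by (simp add: field_simps)
    hence "d * (real (card P) * d) powr v \<le> K * kap powr u * (d^2) powr u * (8*pi) / (2*kap) powr v"
      using kap_pos by (simp add: field_simps)
    thus "d * (real (card P) * d) powr v \<le> K' * (d^2) powr u"
      unfolding K'_def by (simp add: field_simps)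
  qed
qed

lemma full_avg:
  assumes "S \<in> sets borel" "\<And>s. x - t *\<^sub>R ev s \<in> rset S"
  shows "1 \<le> circ_avg (indicator (rset S)) x t"
  using avg_ge[OF rset_borel[OF assms(1)], of 0 "2*pi" x t] assms(2) by simp

lemma tang_ineq:
  assumes g: "good E u v" and E: "E \<subseteq> {1..2}" and v: "v \<ge> 0"
  obtains K where "K > 0" "\<And>d R P a0. 1 \<le> a0 \<Longrightarrow> a0 \<le> 2 \<Longrightarrow> 0 < d \<Longrightarrow> d \<le> R/2 \<Longrightarrow> R \<le> 1 \<Longrightarrow>
      finite P \<Longrightarrow> P \<noteq> {} \<Longrightarrow> P \<subseteq> E \<inter> {a0..a0+R} \<Longrightarrow> sep d P \<Longrightarrow>
      sqrt (d/R) * (real (card P) * R * d) powr v \<le> K * d powr u"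
proof -
  obtain K where K: "K > 0" and KK: "\<And>S a m M T. S \<in> sets borel \<Longrightarrow> emeasure lebesgue (rset S) \<le> ennreal M
     \<Longrightarrow> M > 0 \<Longrightarrow> T \<in> sets lebesgue \<Longrightarrow> ennreal m \<le> emeasure lebesgue T \<Longrightarrow> m > 0 \<Longrightarrow> a > 0
     \<Longrightarrow> T \<subseteq> {x. \<exists>t\<in>E. a \<le> circ_avg (indicator (rset S)) x t} \<Longrightarrow> a * m powr v \<le> K * M powr u"
    using good_K[OF g] by blast
  define K' where "K' = K * (16 * kap) powr u * (2 * pi * sqrt 12) / (2 * kap) powr v"
  have K': "K' > 0" unfolding K'_def using K kap_pos by simp
  show ?thesis
  proof (rule that[OF K'])
    fix d R P a0 assume a0: "1 \<le> a0" "a0 \<le> 2" and d: "0 < d" "d \<le> R/2" and R: "R \<le> 1"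
      and P: "finite P" "P \<noteq> {}" "P \<subseteq> E \<inter> {a0..a0+R}" "sep d P"
    have Rp: "R > 0" using d by auto
    have cP: "real (card P) > 0" using P by auto
    define rho where "rho = a0 + 2*R"
    have rho: "1 \<le> rho" "rho \<le> 4" using a0 Rp R unfolding rho_def by auto
    let ?S = "{rho - d..rho + d}"
    let ?T = "\<Union>p\<in>P. rset {(rho - p) - d/2<..<(rho - p) + d/2}"
    have Tm: "ennreal (real (card P) * (2 * kap * R * d)) \<le> emeasure lebesgue ?T"
    proof (rule ann_union[OF P(1), where rr="\<lambda>p. rho - p"])
      show "\<And>p q. p \<in> P \<Longrightarrow> q \<in> P \<Longrightarrow> p \<noteq> q \<Longrightarrow> d \<le> \<bar>(rho - p) - (rho - q)\<bar>"
        using P(4) unfolding sep_def by (auto simp: abs_minus_commute)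
      show "\<And>p. p \<in> P \<Longrightarrow> R \<le> rho - p" using P(3) unfolding rho_def by auto
    qed (use d in auto)
    have Tl: "?T \<in> sets lebesgue" using rset_leb P(1) by auto
    have rs: "rset ?S = {x::real^2. rho - d \<le> norm x \<and> norm x \<le> rho + d}" unfolding rset_def by auto
    have "emeasure lebesgue (rset ?S) = ennreal (kap * ((rho + d)^2 - (rho - d)^2))"
      unfolding rs by (rule em_closed_ann) (use d R rho in auto)
    also have "kap * ((rho + d)^2 - (rho - d)^2) = 4 * kap * rho * d"
      by (simp add: power2_eq_square algebra_simps)
    also have "\<dots> \<le> 16 * kap * d" using rho kap_pos d by simp
    finally have Mm: "emeasure lebesgue (rset ?S) \<le> ennreal (16 * kap * d)" by (simp add: ennreal_leI)
    let ?a = "sqrt (d / (12*R)) / (2*pi)"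
    have sub: "?T \<subseteq> {x. \<exists>t\<in>E. ?a \<le> circ_avg (indicator (rset ?S)) x t}"
    proof
      fix x assume "x \<in> ?T"
      then obtain p where p: "p \<in> P" "rho - p - d/2 < norm x" "norm x < rho - p + d/2" unfolding rset_def by auto
      have pE: "p \<in> E" "1 \<le> p" "p \<le> 2" "a0 \<le> p" "p \<le> a0 + R" using p P E by auto
      have x1: "\<bar>norm x + p - rho\<bar> < d/2" using p(2,3) unfolding abs_less_iff by linarith
      have x2: "norm x \<le> 3 * R" using p(3) pE d unfolding rho_def by linarith
      have x3: "norm x > 0" using p(2) pE d unfolding rho_def by linarith
      show "x \<in> {x. \<exists>t\<in>E. ?a \<le> circ_avg (indicator (rset ?S)) x t}"
        using tang_avg[OF pE(2,3) d R rho(1) x1 x2 x3] pE(1) by auto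
    qed
    have main: "?a * (real (card P) * (2 * kap * R * d)) powr v \<le> K * (16 * kap * d) powr u"
      by (rule KK[OF _ Mm _ Tl Tm _ _ sub]) (use d Rp kap_pos cP in auto)
    have e0: "?a = sqrt (d/R) / (2 * pi * sqrt 12)"
      by (simp add: real_sqrt_divide real_sqrt_mult field_simps)
    have e1: "(real (card P) * (2 * kap * R * d)) powr v = (2*kap) powr v * (real (card P) * R * d) powr v"
      using kap_pos d cP Rp by (simp add: powr_mult[symmetric] mult_ac)
    have e2: "(16 * kap * d) powr u = (16 * kap) powr u * d powr u"
      using kap_pos d by (simp add: powr_mult)
    have "sqrt (d/R) * (real (card P) * R * d) powr v * ((2*kap) powr v / (2 * pi * sqrt 12))
        \<le> K * (16 * kap) powr u * d powr u"
      using main unfolding e0 e1 e2 by (simp add: field_simps)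
    hence "sqrt (d/R) * (real (card P) * R * d) powr v \<le> K * (16 * kap) powr u * d powr u * (2 * pi * sqrt 12) / (2*kap) powr v"
      using kap_pos by (simp add: field_simps)
    thus "sqrt (d/R) * (real (card P) * R * d) powr v \<le> K' * d powr u"
      unfolding K'_def by (simp add: field_simps)
  qed
qed

lemma ball_ineq:
  assumes g: "good E u v" and E: "E \<subseteq> {1..2}" "E \<noteq> {}"
  obtains K where "K > 0" "\<And>R. 4 \<le> R \<Longrightarrow> (R^2) powr v \<le> K * (R^2) powr u"
proof -
  obtain K where K: "K > 0" and KK: "\<And>S a m M T. S \<in> sets borel \<Longrightarrow> emeasure lebesgue (rset S) \<le> ennreal M
     \<Longrightarrow> M > 0 \<Longrightarrow> T \<in> sets lebesgue \<Longrightarrow> ennreal m \<le> emeasure lebesgue T \<Longrightarrow> m > 0 \<Longrightarrow> a > 0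
     \<Longrightarrow> T \<subseteq> {x. \<exists>t\<in>E. a \<le> circ_avg (indicator (rset S)) x t} \<Longrightarrow> a * m powr v \<le> K * M powr u"
    using good_K[OF g] by blast
  obtain t0 where t0: "t0 \<in> E" using E by auto
  have t0': "1 \<le> t0" "t0 \<le> 2" using t0 E by auto
  define K' where "K' = K * kap powr u / (kap/4) powr v"
  have K': "K' > 0" unfolding K'_def using K kap_pos by simp
  show ?thesis
  proof (rule that[OF K'])
    fix R :: real assume R: "4 \<le> R"
    have rs: "rset {..R} = cball (0::real^2) R" unfolding rset_def by auto
    have Mm: "emeasure lebesgue (rset {..R}) \<le> ennreal (kap * R^2)"
      unfolding rs using R by (simp add: em_cball em_cball')
    have "ennreal (kap * (R/2)^2) \<le> ennreal (kap * (R-2)^2)"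
      using R kap_pos by (intro ennreal_leI mult_left_mono power_mono) auto
    also have "\<dots> = emeasure lebesgue (ball (0::real^2) (R-2))" using R by (simp add: em_ball em_ball')
    finally have Tm: "ennreal (kap/4 * R^2) \<le> emeasure lebesgue (ball (0::real^2) (R-2))"
      by (simp add: power_divide field_simps)
    have sub: "ball 0 (R-2) \<subseteq> {x. \<exists>t\<in>E. 1 \<le> circ_avg (indicator (rset {..R})) x t}"
    proof
      fix x :: "real^2" assume x: "x \<in> ball 0 (R-2)"
      have "x - t0 *\<^sub>R ev s \<in> rset {..R}" for s
      proof -
        have "norm (x - t0 *\<^sub>R ev s) \<le> norm x + norm (t0 *\<^sub>R ev s)" by (rule norm_triangle_ineq4)
        also have "norm (t0 *\<^sub>R ev s) = t0" using t0' by (simp add: norm_ev)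
        finally show ?thesis using x t0' unfolding rset_def by auto
      qed
      thus "x \<in> {x. \<exists>t\<in>E. 1 \<le> circ_avg (indicator (rset {..R})) x t}"
        using full_avg[of "{..R}" x t0] t0 by auto
    qed
    have main: "1 * (kap/4 * R^2) powr v \<le> K * (kap * R^2) powr u"
      by (rule KK[OF _ Mm _ _ Tm _ _ sub]) (use R kap_pos in auto)
    have e1: "(kap/4 * R^2) powr v = (kap/4) powr v * (R^2) powr v" using kap_pos by (intro powr_mult; auto)
    have e2: "(kap * R^2) powr u = kap powr u * (R^2) powr u" using kap_pos by (intro powr_mult; auto)
    have "(kap/4) powr v * (R^2) powr v \<le> K * kap powr u * (R^2) powr u"
      using main unfolding e1 e2 by (simp add: mult_ac)
    thus "(R^2) powr v \<le> K' * (R^2) powr u"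
      unfolding K'_def using kap_pos by (simp add: field_simps)
  qed
qed

lemma ann_ineq:
  assumes g: "good E u v" and E: "E \<subseteq> {1..2}" "E \<noteq> {}"
  obtains K where "K > 0" "\<And>d. 0 < d \<Longrightarrow> d \<le> 1/2 \<Longrightarrow> (d^2) powr v \<le> K * d powr u"
proof -
  obtain K where K: "K > 0" and KK: "\<And>S a m M T. S \<in> sets borel \<Longrightarrow> emeasure lebesgue (rset S) \<le> ennreal M
     \<Longrightarrow> M > 0 \<Longrightarrow> T \<in> sets lebesgue \<Longrightarrow> ennreal m \<le> emeasure lebesgue T \<Longrightarrow> m > 0 \<Longrightarrow> a > 0
     \<Longrightarrow> T \<subseteq> {x. \<exists>t\<in>E. a \<le> circ_avg (indicator (rset S)) x t} \<Longrightarrow> a * m powr v \<le> K * M powr u"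
    using good_K[OF g] by blast
  obtain t0 where t0: "t0 \<in> E" using E by auto
  have t0': "1 \<le> t0" "t0 \<le> 2" using t0 E by auto
  define K' where "K' = K * (8 * kap) powr u / (kap/4) powr v"
  have K': "K' > 0" unfolding K'_def using K kap_pos by simp
  show ?thesis
  proof (rule that[OF K'])
    fix d :: real assume d: "0 < d" "d \<le> 1/2"
    let ?S = "{t0 - d..t0 + d}"
    have rs: "rset ?S = {x::real^2. t0 - d \<le> norm x \<and> norm x \<le> t0 + d}" unfolding rset_def by auto
    have "emeasure lebesgue (rset ?S) = ennreal (kap * ((t0 + d)^2 - (t0 - d)^2))"
      unfolding rs by (rule em_closed_ann) (use d t0' in auto)
    also have "kap * ((t0 + d)^2 - (t0 - d)^2) = 4 * kap * t0 * d"
      by (simp add: power2_eq_square algebra_simps)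
    also have "\<dots> \<le> 8 * kap * d" using t0' kap_pos d by simp
    finally have Mm: "emeasure lebesgue (rset ?S) \<le> ennreal (8 * kap * d)" by (simp add: ennreal_leI)
    have Tm: "ennreal (kap/4 * d^2) \<le> emeasure lebesgue (ball (0::real^2) (d/2))"
      using d by (simp add: em_ball em_ball' power_divide field_simps)
    have sub: "ball 0 (d/2) \<subseteq> {x. \<exists>t\<in>E. 1 \<le> circ_avg (indicator (rset ?S)) x t}"
    proof
      fix x :: "real^2" assume x: "x \<in> ball 0 (d/2)"
      have "x - t0 *\<^sub>R ev s \<in> rset ?S" for s
      proof -
        have n: "norm (t0 *\<^sub>R ev s) = t0" using t0' by (simp add: norm_ev)
        have "norm (x - t0 *\<^sub>R ev s) \<le> norm x + norm (t0 *\<^sub>R ev s)" by (rule norm_triangle_ineq4)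
        moreover have "norm (t0 *\<^sub>R ev s) - norm x \<le> norm (x - t0 *\<^sub>R ev s)"
          by (metis norm_minus_commute norm_triangle_ineq2)
        ultimately show ?thesis using x n d unfolding rset_def by auto
      qed
      thus "x \<in> {x. \<exists>t\<in>E. 1 \<le> circ_avg (indicator (rset ?S)) x t}"
        using full_avg[of ?S x t0] t0 by auto
    qed
    have main: "1 * (kap/4 * d^2) powr v \<le> K * (8 * kap * d) powr u"
      by (rule KK[OF _ Mm _ _ Tm _ _ sub]) (use d kap_pos in auto)
    have e1: "(kap/4 * d^2) powr v = (kap/4) powr v * (d^2) powr v" using kap_pos d by (intro powr_mult; auto)
    have e2: "(8 * kap * d) powr u = (8 * kap) powr u * d powr u" using kap_pos d by (intro powr_mult; auto)
    have "(kap/4) powr v * (d^2) powr v \<le> K * (8 * kap) powr u * d powr u"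
      using main unfolding e1 e2 by (simp add: mult_ac)
    thus "(d^2) powr v \<le> K' * d powr u"
      unfolding K'_def using kap_pos by (simp add: field_simps)
  qed
qed



lemma mink_set_1:
  assumes E: "E \<subseteq> {1..2}"
  shows "1 \<in> {s. s > 0 \<and> (\<exists>c. \<forall>\<delta>. 0 < \<delta> \<and> \<delta> < 1 \<longrightarrow> real (cover_num E \<delta>) \<le> c * \<delta> powr (-s))}"
proof -
  have "real (cover_num E d) \<le> 4 * d powr (-1)" if d: "0 < d" "d < 1" for d
  proof -
    have "real (cover_num E d) \<le> 2 * (1 + d) / d" using E d by (intro cover_num_bound[of _ 1]) auto
    also have "\<dots> \<le> 4 / d" using d by (simp add: divide_right_mono)
    finally show ?thesis using d by (simp add: powr_minus_divide)
  qed
  hence "\<forall>\<delta>. 0 < \<delta> \<and> \<delta> < 1 \<longrightarrow> real (cover_num E \<delta>) \<le> 4 * \<delta> powr (-1)" by blast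
  moreover have "(0::real) < 1" by simp
  ultimately show ?thesis by blast
qed

lemma mink_bounds:
  assumes E: "E \<subseteq> {1..2}"
  shows "0 \<le> minkowski_dim E" "minkowski_dim E \<le> 1"
proof -
  let ?S = "{s. s > 0 \<and> (\<exists>c. \<forall>\<delta>. 0 < \<delta> \<and> \<delta> < 1 \<longrightarrow> real (cover_num E \<delta>) \<le> c * \<delta> powr (-s))}"
  have 1: "1 \<in> ?S" by (rule mink_set_1[OF E])
  have bd: "bdd_below ?S" by (rule bdd_belowI[of _ 0]) auto
  show "minkowski_dim E \<le> 1" unfolding minkowski_dim_def using cInf_lower[OF 1 bd] .
  have ne: "?S \<noteq> {}" using 1 by blast
  show "0 \<le> minkowski_dim E" unfolding minkowski_dim_def
    by (rule cInf_greatest[OF ne]) simp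
qed

lemma mink_extract:
  assumes "0 < s" "s < minkowski_dim E"
  shows "\<exists>\<delta>. 0 < \<delta> \<and> \<delta> < 1 \<and> real (cover_num E \<delta>) > c * \<delta> powr (-s)"
proof (rule ccontr)
  let ?S = "{s. s > 0 \<and> (\<exists>c. \<forall>\<delta>. 0 < \<delta> \<and> \<delta> < 1 \<longrightarrow> real (cover_num E \<delta>) \<le> c * \<delta> powr (-s))}"
  assume "\<not> ?thesis"
  hence "\<forall>\<delta>. 0 < \<delta> \<and> \<delta> < 1 \<longrightarrow> real (cover_num E \<delta>) \<le> c * \<delta> powr (-s)" by (meson not_le)
  hence "s \<in> ?S" using assms by blast
  moreover have "bdd_below ?S" by (rule bdd_belowI[of _ 0]) auto
  ultimately have "minkowski_dim E \<le> s" unfolding minkowski_dim_def by (rule cInf_lower)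
  thus False using assms by simp
qed

lemma assouad_extract:
  assumes "0 < s" "s < assouad_dim E"
  shows "\<exists>a b \<delta>. a < b \<and> 0 < \<delta> \<and> \<delta> < b - a \<and> real (cover_num (E \<inter> {a..b}) \<delta>) > c * (\<delta> / (b - a)) powr (-s)"
proof (rule ccontr)
  let ?S = "{s. s > 0 \<and> (\<exists>c. \<forall>a b \<delta>. a < b \<and> 0 < \<delta> \<and> \<delta> < b - a \<longrightarrow>
      real (cover_num (E \<inter> {a..b}) \<delta>) \<le> c * (\<delta> / (b - a)) powr (-s))}"
  assume "\<not> ?thesis"
  hence "\<forall>a b \<delta>. a < b \<and> 0 < \<delta> \<and> \<delta> < b - a \<longrightarrow>
      real (cover_num (E \<inter> {a..b}) \<delta>) \<le> c * (\<delta> / (b - a)) powr (-s)" by (meson not_le)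
  hence "s \<in> ?S" using assms by blast
  moreover have "bdd_below ?S" by (rule bdd_belowI[of _ 0]) auto
  ultimately have "assouad_dim E \<le> s" unfolding assouad_dim_def by (rule cInf_lower)
  thus False using assms by simp
qed

lemma spec_extract:
  assumes "0 < s" "s < assouad_spec E th"
  shows "\<exists>\<delta> a b. 0 < \<delta> \<and> \<delta> < 1 \<and> a < b \<and> b - a \<ge> \<delta> powr th \<and>
     real (cover_num (E \<inter> {a..b}) \<delta>) > c * (\<delta> / (b - a)) powr (-s)"
proof (rule ccontr)
  let ?S = "{s. s > 0 \<and> (\<exists>c. \<forall>\<delta> a b. 0 < \<delta> \<and> \<delta> < 1 \<and> a < b \<and> b - a \<ge> \<delta> powr th \<longrightarrow>
      real (cover_num (E \<inter> {a..b}) \<delta>) \<le> c * (\<delta> / (b - a)) powr (-s))}"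
  assume "\<not> ?thesis"
  hence "\<forall>\<delta> a b. 0 < \<delta> \<and> \<delta> < 1 \<and> a < b \<and> b - a \<ge> \<delta> powr th \<longrightarrow>
      real (cover_num (E \<inter> {a..b}) \<delta>) \<le> c * (\<delta> / (b - a)) powr (-s)" by (meson not_le)
  hence "s \<in> ?S" using assms by blast
  moreover have "bdd_below ?S" by (rule bdd_belowI[of _ 0]) auto
  ultimately have "assouad_spec E th \<le> s" unfolding assouad_spec_def by (rule cInf_lower)
  thus False using assms by simp
qed

lemma spec_le1:
  assumes E: "E \<subseteq> {1..2}" and th: "0 \<le> th" "th \<le> 1"
  shows "assouad_spec E th \<le> 1"
proof -
  let ?S = "{s. s > 0 \<and> (\<exists>c. \<forall>\<delta> a b. 0 < \<delta> \<and> \<delta> < 1 \<and> a < b \<and> b - a \<ge> \<delta> powr th \<longrightarrow>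
      real (cover_num (E \<inter> {a..b}) \<delta>) \<le> c * (\<delta> / (b - a)) powr (-s))}"
  have "real (cover_num (E \<inter> {a..b}) d) \<le> 4 * (d / (b - a)) powr (-1)"
    if d: "0 < d" "d < 1" "a < b" "b - a \<ge> d powr th" for d a b
  proof -
    have "d powr 1 \<le> d powr th" using d th by (intro powr_mono') auto
    hence dba: "d \<le> b - a" using d by simp
    have "real (cover_num (E \<inter> {a..b}) d) \<le> 2 * ((b - a) + d) / d"
      using d by (intro cover_num_bound[of _ a]) auto
    also have "\<dots> \<le> 4 * (b - a) / d" using d dba by (simp add: divide_right_mono)
    finally show ?thesis using d by (simp add: powr_minus_divide)
  qed
  hence "\<forall>\<delta> a b. 0 < \<delta> \<and> \<delta> < 1 \<and> a < b \<and> b - a \<ge> \<delta> powr th \<longrightarrow>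
      real (cover_num (E \<inter> {a..b}) \<delta>) \<le> 4 * (\<delta> / (b - a)) powr (-1)" by blast
  moreover have "(0::real) < 1" by simp
  ultimately have 1: "1 \<in> ?S" by blast
  have bd: "bdd_below ?S" by (rule bdd_belowI[of _ 0]) auto
  show ?thesis unfolding assouad_spec_def using cInf_lower[OF 1 bd] .
qed

lemma expo_small:
  fixes e K :: real
  assumes "\<And>eps. eps > 0 \<Longrightarrow> \<exists>d. 0 < d \<and> d < eps \<and> d powr e \<le> K"
  shows "0 \<le> e"
proof (rule ccontr)
  assume "\<not> 0 \<le> e"
  hence e: "e < 0" by simp
  define eps where "eps = (\<bar>K\<bar> + 1) powr (1/e)"
  have eps: "eps > 0" unfolding eps_def by simp
  obtain d where d: "0 < d" "d < eps" "d powr e \<le> K" using assms[OF eps] by blast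
  have "eps powr e < d powr e" using d e eps by (intro powr_less_mono2_neg) auto
  moreover have "eps powr e = \<bar>K\<bar> + 1" unfolding eps_def using e by (simp add: powr_powr)
  ultimately show False using d by linarith
qed

lemma expo_big:
  fixes e K :: real
  assumes "\<And>X. X \<ge> 16 \<Longrightarrow> X powr e \<le> K"
  shows "e \<le> 0"
proof (rule ccontr)
  assume "\<not> e \<le> 0"
  hence e: "e > 0" by simp
  define X where "X = max 16 ((\<bar>K\<bar> + 1) powr (1/e))"
  have "(\<bar>K\<bar> + 1) powr (1/e) \<le> X" unfolding X_def by simp
  hence "((\<bar>K\<bar> + 1) powr (1/e)) powr e \<le> X powr e" using e by (intro powr_mono2) auto
  hence "\<bar>K\<bar> + 1 \<le> X powr e" using e by (simp add: powr_powr)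
  moreover have "X powr e \<le> K" using assms[of X] unfolding X_def by simp
  ultimately show False by linarith
qed



lemma pw2: "0 < (x::real) \<Longrightarrow> (x^2) powr v = x powr (2 * v)"
proof -
  assume x: "0 < x"
  have "x^2 = x powr 2" using x by simp
  thus ?thesis by (simp add: powr_powr)
qed

lemma disc_core:
  fixes d cP K u v s :: real
  assumes d: "0 < d" and v: "v \<ge> 0" and cP: "cP \<ge> d powr (-s) / 2"
    and ineq: "d * (cP * d) powr v \<le> K * (d^2) powr u"
  shows "d powr (1 + (1-s) * v - 2 * u) \<le> K * 2 powr v"
proof -
  define Y where "Y = d powr (1 - s) / 2"
  have Yp: "Y > 0" unfolding Y_def using d by simp
  have "Y = d powr (-s) / 2 * d" unfolding Y_def using d by (simp add: powr_diff powr_minus_divide)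
  also have "\<dots> \<le> cP * d" using cP d by (intro mult_right_mono) auto
  finally have "Y powr v \<le> (cP * d) powr v" using Yp v by (intro powr_mono2) auto
  hence "d * Y powr v \<le> K * (d^2) powr u" using ineq d by (smt (verit) mult_left_mono)
  moreover have "Y powr v = d powr ((1-s) * v) / 2 powr v"
    unfolding Y_def using d by (simp add: powr_divide powr_powr)
  moreover have "(d^2) powr u = d powr (2 * u)"
  proof -
    have "d^2 = d powr 2" using d by simp
    thus ?thesis by (simp add: powr_powr)
  qed
  ultimately have "d * d powr ((1-s) * v) / 2 powr v \<le> K * d powr (2 * u)" using d by simp
  moreover have "d powr (1 + (1-s) * v) = d * d powr ((1-s) * v)" using d by (simp add: powr_add)
  ultimately have "d powr (1 + (1-s) * v) \<le> K * d powr (2 * u) * 2 powr v"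
    by (simp add: divide_le_eq)
  hence "d powr (1 + (1-s) * v) / d powr (2 * u) \<le> K * 2 powr v"
    using d by (simp add: divide_le_eq mult_ac)
  thus ?thesis by (simp add: powr_diff[symmetric])
qed

lemma tang_core:
  fixes d R cP K u v s :: real
  assumes d: "0 < d" and R: "0 < R" and v: "v \<ge> 0" and cP: "cP \<ge> (d/R) powr (-s) / 2"
    and ineq: "sqrt (d/R) * (cP * R * d) powr v \<le> K * d powr u"
  shows "(d/R) powr (1/2 + (1-s) * v - u) * R powr (2 * v - u) \<le> K * 2 powr v"
proof -
  define l where "l = d/R"
  have l: "l > 0" "d = l * R" unfolding l_def using d R by auto
  define Y where "Y = l powr (1 - s) * R powr 2 / 2"
  have Yp: "Y > 0" unfolding Y_def using l R by simp
  have "Y = l powr (-s) / 2 * R * d" unfolding Y_def using l R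
    by (simp add: powr_diff powr_minus_divide power2_eq_square)
  also have "\<dots> \<le> cP * R * d" using cP d R unfolding l_def by (intro mult_right_mono) auto
  finally have "Y powr v \<le> (cP * R * d) powr v" using Yp v by (intro powr_mono2) auto
  hence "sqrt l * Y powr v \<le> K * d powr u" using ineq l unfolding l_def
    by (smt (verit) mult_left_mono real_sqrt_ge_zero)
  moreover have "Y powr v = l powr ((1-s) * v) * R powr (2 * v) / 2 powr v"
    unfolding Y_def using l R by (simp add: powr_divide powr_powr powr_mult pw2)
  moreover have "sqrt l = l powr (1/2)" using l by (simp add: powr_half_sqrt)
  moreover have "d powr u = l powr u * R powr u" using l R by (simp add: powr_mult)
  ultimately have "l powr (1/2) * (l powr ((1-s) * v) * R powr (2 * v) / 2 powr v) \<le> K * (l powr u * R powr u)"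
    by simp
  hence "l powr (1/2 + (1-s) * v) * R powr (2 * v) \<le> K * (l powr u * R powr u) * 2 powr v"
    by (simp add: powr_add divide_le_eq mult_ac)
  hence "(l powr (1/2 + (1-s) * v) / l powr u) * (R powr (2 * v) / R powr u) \<le> K * 2 powr v"
    using l R by (simp add: divide_le_eq field_simps)
  thus ?thesis unfolding l_def[symmetric] by (simp add: powr_diff[symmetric])
qed



lemma config:
  assumes E: "E \<subseteq> {1..2}" and ab: "a < b" and d: "0 < d" "d < b - a" and s: "s > 0" and c: "c \<ge> 6"
    and N: "real (cover_num (E \<inter> {a..b}) d) > c * (d/(b-a)) powr (-s)"
  obtains a0 R P where "1 \<le> a0" "a0 \<le> 2" "0 < R" "R \<le> 1" "R = min (b-a) 1" "d \<le> R/2"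
    "finite P" "P \<noteq> {}" "P \<subseteq> E \<inter> {a0..a0+R}" "sep d P"
    "real (card P) \<ge> (d/R) powr (-s) / 2" "d/R < 2/(c-2)"
proof -
  define a0 where "a0 = max a 1"
  define R where "R = min (b-a) 1"
  have R: "0 < R" "R \<le> 1" "R \<le> b - a" using ab unfolding R_def by auto
  have F: "E \<inter> {a..b} \<subseteq> {a0..a0+R}"
  proof
    fix y assume y: "y \<in> E \<inter> {a..b}"
    hence "1 \<le> y" "y \<le> 2" "a \<le> y" "y \<le> b" using E by auto
    thus "y \<in> {a0..a0+R}" unfolding a0_def R_def by auto
  qed
  have lam: "d / (b-a) \<le> d / R" using R d by (intro divide_left_mono) auto
  have "(d/R) powr (-s) \<le> (d/(b-a)) powr (-s)"
    using lam d ab s by (intro powr_mono2') auto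
  moreover have "1 \<le> (d/(b-a)) powr (-s)"
  proof -
    have "(d/(b-a)) powr s \<le> 1" using d ab s by (intro powr_le1) auto
    thus ?thesis using d ab by (simp add: powr_minus_divide)
  qed
  ultimately have X: "(d/R) powr (-s) \<le> (d/(b-a)) powr (-s)" "1 \<le> (d/(b-a)) powr (-s)" by auto
  obtain P where P: "finite P" "P \<subseteq> E \<inter> {a..b}" "sep d P" "real (card P) > c * (d/(b-a)) powr (-s) / 2"
    using many_points[OF F d(1) _ N] R by auto
  have cardP: "real (card P) \<ge> (d/R) powr (-s) / 2"
  proof -
    have "(d/(b-a)) powr (-s) \<le> c * (d/(b-a)) powr (-s)"
      using X c by (intro mult_le_cancel_right1[THEN iffD2]) auto
    hence "(d/R) powr (-s) \<le> c * (d/(b-a)) powr (-s)" using X(1) by linarith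
    thus ?thesis using P(4) by linarith
  qed
  have "c \<le> c * (d/(b-a)) powr (-s)" using X c by (simp add: mult_le_cancel_left1)
  also have "\<dots> < real (cover_num (E \<inter> {a..b}) d)" by (rule N)
  also have "\<dots> \<le> 2 * (R + d) / d" by (rule cover_num_bound[OF F d(1)]) (use R in auto)
  finally have "c * d < 2 * (R + d)" using d by (simp add: field_simps)
  hence cd: "(c - 2) * d < 2 * R" by (simp add: algebra_simps)
  have l2: "d/R < 2/(c-2)" using cd c R d by (simp add: field_simps)
  have "4 * d \<le> (c - 2) * d" using c d by (intro mult_right_mono) auto
  hence dR: "d \<le> R/2" using cd by linarith
  have Pne: "P \<noteq> {}"
  proof
    assume "P = {}"
    hence "c * (d/(b-a)) powr (-s) / 2 < 0" using P(4) by simp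
    moreover have "0 \<le> c * (d/(b-a)) powr (-s)" using X c by simp
    ultimately show False by linarith
  qed
  then obtain p where p: "p \<in> P" by auto
  have "p \<in> E" "a \<le> p" using p P(2) by auto
  hence "a \<le> 2" using E by force
  hence a02: "a0 \<le> 2" unfolding a0_def by simp
  have PP: "P \<subseteq> E \<inter> {a0..a0+R}" using P(2) F by auto
  have a01: "1 \<le> a0" unfolding a0_def by simp
  show ?thesis by (rule that[OF a01 a02 R(1,2) R_def dR P(1) Pne PP P(3) cardP l2])
qed

lemma C1:
  assumes g: "good E u v" and E: "E \<subseteq> {1..2}" "E \<noteq> {}"
  shows "v \<le> u"
proof -
  obtain K where K: "K > 0" "\<And>R. 4 \<le> R \<Longrightarrow> (R^2) powr v \<le> K * (R^2) powr u"
    using ball_ineq[OF g E] by blast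
  have "v - u \<le> 0"
  proof (rule expo_big[where K=K])
    fix X :: real assume X: "X \<ge> 16"
    have "4 \<le> sqrt X" using X real_le_rsqrt[of 4 X] by simp
    hence "((sqrt X)^2) powr v \<le> K * ((sqrt X)^2) powr u" by (rule K(2))
    hence "X powr v \<le> K * X powr u" using X by simp
    thus "X powr (v - u) \<le> K" using X by (simp add: powr_diff field_simps)
  qed
  thus ?thesis by simp
qed

lemma C2:
  assumes g: "good E u v" and E: "E \<subseteq> {1..2}" "E \<noteq> {}"
  shows "u \<le> 2 * v"
proof -
  obtain K where K: "K > 0" "\<And>d. 0 < d \<Longrightarrow> d \<le> 1/2 \<Longrightarrow> (d^2) powr v \<le> K * d powr u"
    using ann_ineq[OF g E] by blast
  have "0 \<le> 2 * v - u"
  proof (rule expo_small[where K=K])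
    fix eps :: real assume eps: "eps > 0"
    define d where "d = min (eps/2) (1/2)"
    have d: "0 < d" "d < eps" "d \<le> 1/2" unfolding d_def using eps by auto
    have "(d^2) powr v \<le> K * d powr u" using K(2) d by auto
    moreover have "(d^2) powr v = d powr (2 * v)"
    proof -
      have "d^2 = d powr 2" using d by (simp add: powr_numeral)
      thus ?thesis by (simp add: powr_powr)
    qed
    ultimately have "d powr (2 * v) \<le> K * d powr u" by simp
    hence "d powr (2 * v - u) \<le> K" using d by (simp add: powr_diff field_simps)
    thus "\<exists>d. 0 < d \<and> d < eps \<and> d powr (2 * v - u) \<le> K" using d by blast
  qed
  thus ?thesis by simp
qed

lemma C3_gen:
  assumes g: "good E u v" and E: "E \<subseteq> {1..2}" and v: "v \<ge> 0"
    and ex: "\<And>eps. eps > 0 \<Longrightarrow> \<exists>d P. 0 < d \<and> d < eps \<and> d \<le> 1/2 \<and> finite P \<and> P \<noteq> {} \<and> P \<subseteq> E \<and> sep d P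
      \<and> real (card P) \<ge> d powr (-s) / 2"
  shows "0 \<le> 1 + (1-s) * v - 2 * u"
proof -
  obtain K where K: "K > 0" "\<And>d P. 0 < d \<Longrightarrow> d \<le> 1/2 \<Longrightarrow> finite P \<Longrightarrow> P \<noteq> {} \<Longrightarrow> P \<subseteq> E \<Longrightarrow> sep d P \<Longrightarrow>
      d * (real (card P) * d) powr v \<le> K * (d^2) powr u"
    using disc_ineq[OF g E v] by blast
  show ?thesis
  proof (rule expo_small[where K="K * 2 powr v"])
    fix eps :: real assume eps: "eps > 0"
    obtain d P where dP: "0 < d" "d < eps" "d \<le> 1/2" "finite P" "P \<noteq> {}" "P \<subseteq> E" "sep d P"
      "real (card P) \<ge> d powr (-s) / 2" using ex[OF eps] by blast
    have "d * (real (card P) * d) powr v \<le> K * (d^2) powr u" using K(2) dP by blast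
    hence "d powr (1 + (1-s) * v - 2 * u) \<le> K * 2 powr v" by (rule disc_core[OF dP(1) v dP(8)])
    thus "\<exists>d. 0 < d \<and> d < eps \<and> d powr (1 + (1-s) * v - 2 * u) \<le> K * 2 powr v" using dP by blast
  qed
qed

lemma C3_zero:
  assumes g: "good E u v" and E: "E \<subseteq> {1..2}" "E \<noteq> {}" and v: "v \<ge> 0"
  shows "0 \<le> 1 + v - 2 * u"
proof -
  obtain t0 where t0: "t0 \<in> E" using E by auto
  have "0 \<le> 1 + (1-0) * v - 2 * u"
  proof (rule C3_gen[OF g E(1) v])
    fix eps :: real assume eps: "eps > 0"
    define d where "d = min (eps/2) (1/2)"
    have d: "0 < d" "d < eps" "d \<le> 1/2" unfolding d_def using eps by auto
    have "real (card {t0}) \<ge> d powr (-0) / 2" using d by simp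
    moreover have "sep d {t0}" unfolding sep_def by auto
    ultimately show "\<exists>d P. 0 < d \<and> d < eps \<and> d \<le> 1/2 \<and> finite P \<and> P \<noteq> {} \<and> P \<subseteq> E \<and> sep d P
      \<and> real (card P) \<ge> d powr (-0) / 2" using d t0 by blast
  qed
  thus ?thesis by simp
qed

lemma C3_pos:
  assumes g: "good E u v" and E: "E \<subseteq> {1..2}" and v: "v \<ge> 0" and s: "0 < s" "s < minkowski_dim E"
  shows "0 \<le> 1 + (1-s) * v - 2 * u"
proof (rule C3_gen[OF g E v])
  have s1: "s < 1" using s mink_bounds[OF E] by linarith
  fix eps :: real assume eps: "eps > 0"
  define eta where "eta = min eps (1/2)"
  have eta: "0 < eta" "eta \<le> eps" "eta \<le> 1/2" unfolding eta_def using eps by auto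
  define c where "c = max 1 (4 / eta powr (1-s))"
  have c: "c \<ge> 1" "c \<ge> 4 / eta powr (1-s)" unfolding c_def by auto
  obtain d where d: "0 < d" "d < 1" "real (cover_num E d) > c * d powr (-s)"
    using mink_extract[OF s, of c] by blast
  have E2: "E \<subseteq> {1..1+1}" using E by auto
  have "real (cover_num E d) \<le> 2 * (1 + d) / d" by (rule cover_num_bound[OF E2 d(1)]) simp
  also have "\<dots> \<le> 4 / d" using d by (simp add: divide_right_mono)
  finally have "c * d powr (-s) < 4 / d" using d(3) by linarith
  hence "c * d powr (-s) * (d powr s * d) < 4 / d * (d powr s * d)" using d by (intro mult_strict_right_mono) auto
  hence "c * d < 4 * d powr s" using d by (simp add: powr_minus field_simps)
  moreover have "d = d powr s * d powr (1-s)" using d by (simp add: powr_add[symmetric])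
  ultimately have "c * (d powr s * d powr (1-s)) < 4 * d powr s" by metis
  hence cd: "c * d powr (1-s) < 4" using d by (simp add: field_simps)
  have dlt: "d < eta"
  proof (rule ccontr)
    assume "\<not> d < eta"
    hence "eta powr (1-s) \<le> d powr (1-s)" using eta s1 by (intro powr_mono2) auto
    hence "4 / eta powr (1-s) * eta powr (1-s) \<le> c * d powr (1-s)"
      using c eta by (intro mult_mono) auto
    thus False using cd eta by simp
  qed
  obtain P where P: "finite P" "P \<subseteq> E" "sep d P" "real (card P) > c * d powr (-s) / 2"
    using many_points[OF E2 d(1) _ d(3)] by auto
  have cP: "real (card P) \<ge> d powr (-s) / 2"
  proof -
    have "1 * d powr (-s) \<le> c * d powr (-s)" using c by (intro mult_right_mono) auto
    thus ?thesis using P(4) by linarith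
  qed
  have "P \<noteq> {}" using cP P(4) c by (smt (verit) card.empty of_nat_0 powr_gt_zero d(1) divide_pos_pos mult_pos_pos)
  thus "\<exists>d P. 0 < d \<and> d < eps \<and> d \<le> 1/2 \<and> finite P \<and> P \<noteq> {} \<and> P \<subseteq> E \<and> sep d P
      \<and> real (card P) \<ge> d powr (-s) / 2" using d dlt eta P cP by (intro exI[of _ d] exI[of _ P]) auto
qed

lemma tang_K:
  assumes g: "good E u v" and E: "E \<subseteq> {1..2}" and v: "v \<ge> 0"
  obtains K where "K > 0" "\<And>d R P a0 s. 1 \<le> a0 \<Longrightarrow> a0 \<le> 2 \<Longrightarrow> 0 < d \<Longrightarrow> d \<le> R/2 \<Longrightarrow> R \<le> 1 \<Longrightarrow>
      finite P \<Longrightarrow> P \<noteq> {} \<Longrightarrow> P \<subseteq> E \<inter> {a0..a0+R} \<Longrightarrow> sep d P \<Longrightarrow> real (card P) \<ge> (d/R) powr (-s) / 2 \<Longrightarrow>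
      (d/R) powr (1/2 + (1-s) * v - u) * R powr (2 * v - u) \<le> K * 2 powr v"
proof -
  obtain K where K: "K > 0" "\<And>d R P a0. 1 \<le> a0 \<Longrightarrow> a0 \<le> 2 \<Longrightarrow> 0 < d \<Longrightarrow> d \<le> R/2 \<Longrightarrow> R \<le> 1 \<Longrightarrow>
      finite P \<Longrightarrow> P \<noteq> {} \<Longrightarrow> P \<subseteq> E \<inter> {a0..a0+R} \<Longrightarrow> sep d P \<Longrightarrow>
      sqrt (d/R) * (real (card P) * R * d) powr v \<le> K * d powr u"
    using tang_ineq[OF g E v] by blast
  show ?thesis
  proof (rule that[OF K(1)])
    fix d R P a0 s assume h: "1 \<le> a0" "a0 \<le> 2" "0 < d" "d \<le> R/2" "R \<le> 1" "finite P" "P \<noteq> {}"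
      "P \<subseteq> E \<inter> {a0..a0+R}" "sep d P" "real (card P) \<ge> (d/R) powr (-s) / 2"
    have R: "0 < R" using h by auto
    have "sqrt (d/R) * (real (card P) * R * d) powr v \<le> K * d powr u" by (rule K(2)[OF h(1-9)])
    thus "(d/R) powr (1/2 + (1-s) * v - u) * R powr (2 * v - u) \<le> K * 2 powr v"
      by (rule tang_core[OF h(3) R v h(10)])
  qed
qed

lemma eps_c: "(eps::real) > 0 \<Longrightarrow> c = max 6 (2 + 2/eps) \<Longrightarrow> 2/(c-2) \<le> eps"
proof -
  assume e: "eps > 0" and c: "c = max 6 (2 + 2/eps)"
  have "2/eps \<le> c - 2" using c by auto
  moreover have "c - 2 > 0" using c by auto
  ultimately show ?thesis using e by (simp add: field_simps)
qed

lemma CA: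
  assumes g: "good E u v" and E: "E \<subseteq> {1..2}" and v: "v \<ge> 0" and uv: "u = 2 * v"
    and s: "0 < s" "s < assouad_dim E"
  shows "0 \<le> 1/2 + (1-s) * v - u"
proof -
  obtain K where K: "K > 0" "\<And>d R P a0 s. 1 \<le> a0 \<Longrightarrow> a0 \<le> 2 \<Longrightarrow> 0 < d \<Longrightarrow> d \<le> R/2 \<Longrightarrow> R \<le> 1 \<Longrightarrow>
      finite P \<Longrightarrow> P \<noteq> {} \<Longrightarrow> P \<subseteq> E \<inter> {a0..a0+R} \<Longrightarrow> sep d P \<Longrightarrow> real (card P) \<ge> (d/R) powr (-s) / 2 \<Longrightarrow>
      (d/R) powr (1/2 + (1-s) * v - u) * R powr (2 * v - u) \<le> K * 2 powr v"
    using tang_K[OF g E v] by blast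
  show ?thesis
  proof (rule expo_small[where K="K * 2 powr v"])
    fix eps :: real assume eps: "eps > 0"
    define c where "c = max 6 (2 + 2/eps)"
    have c: "c \<ge> 6" "2/(c-2) \<le> eps" using eps_c[OF eps c_def] unfolding c_def by auto
    obtain a b d where abd: "a < b" "0 < d" "d < b - a" "real (cover_num (E \<inter> {a..b}) d) > c * (d / (b - a)) powr (-s)"
      using assouad_extract[OF s, of c] by blast
    obtain a0 R P where cf: "1 \<le> a0" "a0 \<le> 2" "0 < R" "R \<le> 1" "R = min (b-a) 1" "d \<le> R/2"
      "finite P" "P \<noteq> {}" "P \<subseteq> E \<inter> {a0..a0+R}" "sep d P"
      "real (card P) \<ge> (d/R) powr (-s) / 2" "d/R < 2/(c-2)"
      by (rule config[OF E abd(1-3) s(1) c(1) abd(4)])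
    have "(d/R) powr (1/2 + (1-s) * v - u) * R powr (2 * v - u) \<le> K * 2 powr v"
      by (rule K(2)[OF cf(1,2) abd(2) cf(6,4,7,8,9,10,11)])
    hence "(d/R) powr (1/2 + (1-s) * v - u) \<le> K * 2 powr v" using uv cf(3) by simp
    moreover have "0 < d/R" "d/R < eps" using cf abd c by auto
    ultimately show "\<exists>l. 0 < l \<and> l < eps \<and> l powr (1/2 + (1-s) * v - u) \<le> K * 2 powr v" by blast
  qed
qed

lemma C4:
  assumes g: "good E u v" and E: "E \<subseteq> {1..2}" and v: "v \<ge> 0" and uv: "u \<le> 2 * v"
    and th: "0 < th" "th < 1" and s: "0 < s" "s < assouad_spec E th"
  shows "0 \<le> (1-th) * (1/2 + (1-s) * v - u) + th * (2 * v - u)"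
proof -
  obtain K where K: "K > 0" "\<And>d R P a0 s. 1 \<le> a0 \<Longrightarrow> a0 \<le> 2 \<Longrightarrow> 0 < d \<Longrightarrow> d \<le> R/2 \<Longrightarrow> R \<le> 1 \<Longrightarrow>
      finite P \<Longrightarrow> P \<noteq> {} \<Longrightarrow> P \<subseteq> E \<inter> {a0..a0+R} \<Longrightarrow> sep d P \<Longrightarrow> real (card P) \<ge> (d/R) powr (-s) / 2 \<Longrightarrow>
      (d/R) powr (1/2 + (1-s) * v - u) * R powr (2 * v - u) \<le> K * 2 powr v"
    using tang_K[OF g E v] by blast
  define e where "e = (1/2 + (1-s) * v - u) + th * (2 * v - u) / (1 - th)"
  have "0 \<le> e"
  proof (rule expo_small[where K="K * 2 powr v"])
    fix eps :: real assume eps: "eps > 0"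
    define c where "c = max 6 (2 + 2/eps)"
    have c: "c \<ge> 6" "2/(c-2) \<le> eps" using eps_c[OF eps c_def] unfolding c_def by auto
    obtain d a b where abd: "0 < d" "d < 1" "a < b" "b - a \<ge> d powr th"
      "real (cover_num (E \<inter> {a..b}) d) > c * (d / (b - a)) powr (-s)"
      using spec_extract[OF s, of c] by blast
    have "d powr 1 < d powr th" using abd th by (intro powr_less_mono') auto
    hence dba: "d < b - a" using abd by simp
    obtain a0 R P where cf: "1 \<le> a0" "a0 \<le> 2" "0 < R" "R \<le> 1" "R = min (b-a) 1" "d \<le> R/2"
      "finite P" "P \<noteq> {}" "P \<subseteq> E \<inter> {a0..a0+R}" "sep d P"
      "real (card P) \<ge> (d/R) powr (-s) / 2" "d/R < 2/(c-2)"
      by (rule config[OF E abd(3) abd(1) dba s(1) c(1) abd(5)])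
    define l where "l = d/R"
    have l: "0 < l" "d = l * R" unfolding l_def using cf abd by auto
    have main: "l powr (1/2 + (1-s) * v - u) * R powr (2 * v - u) \<le> K * 2 powr v"
      unfolding l_def by (rule K(2)[OF cf(1,2) abd(1) cf(6,4,7,8,9,10,11)])
    have "d powr th \<le> 1" using abd th by (intro powr_le1) auto
    hence Rd: "d powr th \<le> R" using cf abd by auto
    have "l powr th * R powr th \<le> R" using Rd l cf by (simp add: powr_mult)
    hence "l powr th \<le> R / R powr th" using cf by (simp add: field_simps)
    also have "\<dots> = R powr (1 - th)" using cf by (simp add: powr_diff)
    finally have "(l powr th) powr (1/(1-th)) \<le> (R powr (1 - th)) powr (1/(1-th))"
      using th l by (intro powr_mono2) auto
    hence "l powr (th/(1-th)) \<le> R" using th cf by (simp add: powr_powr)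
    hence "(l powr (th/(1-th))) powr (2 * v - u) \<le> R powr (2 * v - u)"
      using uv l by (intro powr_mono2) auto
    hence "l powr (th * (2 * v - u)/(1-th)) \<le> R powr (2 * v - u)" by (simp add: powr_powr)
    hence "l powr (1/2 + (1-s) * v - u) * l powr (th * (2 * v - u)/(1-th))
        \<le> l powr (1/2 + (1-s) * v - u) * R powr (2 * v - u)" by (intro mult_left_mono) auto
    also have "\<dots> \<le> K * 2 powr v" by (rule main)
    finally have "l powr e \<le> K * 2 powr v" unfolding e_def by (simp add: powr_add)
    moreover have "l < eps" using cf c unfolding l_def by linarith
    ultimately show "\<exists>l. 0 < l \<and> l < eps \<and> l powr e \<le> K * 2 powr v" using l by blast
  qed
  hence "0 \<le> (1 - th) * e" using th by simp
  also have "(1 - th) * e = (1-th) * (1/2 + (1-s) * v - u) + th * (2 * v - u)"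
    unfolding e_def using th by (simp add: field_simps)
  finally show ?thesis .
qed



lemma tri_mem:
  fixes a1 a2 b1 b2 u v al mu :: real
  assumes "al * a1 + mu * b1 = u" "al * a2 + mu * b2 = v" "0 \<le> al" "0 \<le> mu" "al + mu \<le> 1"
  shows "(u, v) \<in> convex hull {(0,0), (a1,a2), (b1,b2)}"
proof -
  have "(u, v) = (1 - al - mu) *\<^sub>R (0::real,0::real) + al *\<^sub>R (a1,a2) + mu *\<^sub>R (b1,b2)"
    using assms by simp
  thus ?thesis unfolding convex_hull_3 using assms by (intro CollectI exI[of _ "1 - al - mu"] exI[of _ al] exI[of _ mu]) auto
qed

lemma cramer:
  fixes a1 a2 b1 b2 u v dt :: real
  assumes "dt = a1 * b2 - a2 * b1" "dt \<noteq> 0"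
  shows "((u * b2 - v * b1) / dt) * a1 + ((a1 * v - a2 * u) / dt) * b1 = u"
    "((u * b2 - v * b1) / dt) * a2 + ((a1 * v - a2 * u) / dt) * b2 = v"
proof -
  have "((u * b2 - v * b1) / dt) * a1 + ((a1 * v - a2 * u) / dt) * b1 = ((u * b2 - v * b1) * a1 + (a1 * v - a2 * u) * b1) / dt"
    by (simp add: add_divide_distrib)
  also have "(u * b2 - v * b1) * a1 + (a1 * v - a2 * u) * b1 = u * dt" unfolding assms(1) by (simp add: algebra_simps)
  finally show "((u * b2 - v * b1) / dt) * a1 + ((a1 * v - a2 * u) / dt) * b1 = u" using assms(2) by simp
  have "((u * b2 - v * b1) / dt) * a2 + ((a1 * v - a2 * u) / dt) * b2 = ((u * b2 - v * b1) * a2 + (a1 * v - a2 * u) * b2) / dt"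
    by (simp add: add_divide_distrib)
  also have "(u * b2 - v * b1) * a2 + (a1 * v - a2 * u) * b2 = v * dt" unfolding assms(1) by (simp add: algebra_simps)
  finally show "((u * b2 - v * b1) / dt) * a2 + ((a1 * v - a2 * u) / dt) * b2 = v" using assms(2) by simp
qed

lemma quad_mem:
  fixes b g u v :: real
  assumes b: "0 \<le> b" "b \<le> 1" and bg: "1 + b \<le> 2 * g" and b1: "b = 1 \<Longrightarrow> g = 1"
    and uv: "0 \<le> u" "0 \<le> v" "v \<le> u" "u \<le> 2 * v" "2 * u - (1 - b) * v \<le> 1"
    and F: "b > 0 \<Longrightarrow> (1 - (1 - b/g))/2 + ((1 - (1 - b/g)) * (1 - g) + 2 * (1 - b/g)) * v - u \<ge> 0"
  shows "(u, v) \<in> quadQ b g"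
proof -
  have gp: "g > 0" using bg b by linarith
  define th where "th = theta_Q b g"
  have th0: "0 < th \<and> th \<le> 1 \<and> 1 - b = 2 * th * (g - b)"
  proof (cases "b < 1")
    case True
    have gb: "g - b > 0" using bg True by linarith
    have thd: "th = (1 - b) / (2 * (g - b))" unfolding th_def theta_Q_def using True by simp
    have "0 < th" unfolding thd using True gb by simp
    moreover have "th \<le> 1" unfolding thd using gb bg by (simp add: field_simps)
    moreover have "1 - b = 2 * th * (g - b)" unfolding thd using gb by (simp add: field_simps)
    ultimately show ?thesis by blast
  next
    case False
    hence "b = 1" using b by simp
    moreover hence "th = 1" unfolding th_def theta_Q_def by simp
    ultimately show ?thesis using b1 by auto
  qed
  hence th: "0 < th" "th \<le> 1" "1 - b = 2 * th * (g - b)" by auto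
  define D where "D = 2 * (1 + g * th)"
  have D: "D > 0" unfolding D_def using gp th by (simp add: add_pos_nonneg)
  define x3 where "x3 = (2 - b * (1 - th)) / D"
  define y3 where "y3 = 1 / D"
  have Q3: "Q3 b g = (x3, y3)" unfolding Q3_def x3_def y3_def D_def th_def Let_def by simp
  have bt: "0 \<le> b * (1 - th)" "b * (1 - th) < 1"
  proof -
    show "0 \<le> b * (1 - th)" using b th by simp
    show "b * (1 - th) < 1"
    proof (cases "b = 1")
      case True thus ?thesis using th by simp
    next
      case False
      hence "b < 1" using b by simp
      moreover have "1 - th < 1" using th by simp
      moreover have "1 - th \<ge> 0" using th by simp
      have "b * (1 - th) \<le> b * 1" using b th by (intro mult_left_mono) auto
      thus ?thesis using \<open>b < 1\<close> by simp
    qed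
  qed
  have y3p: "y3 > 0" unfolding y3_def using D by simp
  have xy: "x3 > y3" unfolding x3_def y3_def using D bt by (simp add: divide_strict_right_mono)
  have x2y: "x3 \<le> 2 * y3" unfolding x3_def y3_def using D bt by (simp add: divide_right_mono field_simps)
  have L3: "2 * x3 - (1 - b) * y3 = 1"
  proof -
    have "2 * x3 - (1 - b) * y3 = (4 - 2 * b * (1 - th) - (1 - b)) / D"
      unfolding x3_def y3_def using D by (simp add: field_simps)
    also have "4 - 2 * b * (1 - th) - (1 - b) = D" unfolding D_def using th(3) by (simp add: algebra_simps)
    finally show ?thesis using D by simp
  qed
  define q where "q = 1 / (1 + b)"
  have qp: "q > 0" unfolding q_def using b by simp
  have Q1: "Q1 b = (q, q)" unfolding Q1_def q_def by simp
  have L1: "2 * q - (1 - b) * q = 1"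
  proof -
    have "2 * q - (1 - b) * q = (1 + b) * q" by (simp add: algebra_simps)
    also have "\<dots> = 1" unfolding q_def using b by simp
    finally show ?thesis .
  qed
  define x2 where "x2 = 1 / (1 + g)"
  have x2p: "x2 > 0" unfolding x2_def using gp by simp
  have Q2: "Q2 (2 * g - 1) = (x2, x2 / 2)" unfolding Q2_def x2_def using gp by (simp add: field_simps)
  have sub3: "convex hull {(0,0), Q1 b, Q3 b g} \<subseteq> quadQ b g"
    unfolding quadQ_def by (rule hull_mono) auto
  have sub3': "convex hull {(0,0), Q3 b g, Q2 (2 * g - 1)} \<subseteq> quadQ b g"
    unfolding quadQ_def by (rule hull_mono) auto
  show ?thesis
  proof (cases "u * y3 \<le> v * x3")
    case True
    define det where "det = q * (y3 - x3)"
    have det: "det < 0" unfolding det_def using qp xy by (simp add: mult_pos_neg)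
    define al where "al = (u * y3 - v * x3) / det"
    define mu where "mu = (q * v - q * u) / det"
    have dd: "det = q * y3 - q * x3" unfolding det_def by (simp add: algebra_simps)
    have e1: "al * q + mu * x3 = u" unfolding al_def mu_def using cramer(1)[OF dd] det by simp
    have e2: "al * q + mu * y3 = v" unfolding al_def mu_def using cramer(2)[OF dd] det by simp
    have al0: "0 \<le> al" unfolding al_def using True det by (simp add: divide_nonpos_neg)
    have mu0: "0 \<le> mu" unfolding mu_def using uv det qp
      by (intro divide_nonpos_neg) (auto simp: algebra_simps mult_left_mono)
    have "al + mu = al * (2 * q - (1 - b) * q) + mu * (2 * x3 - (1 - b) * y3)" using L1 L3 by simp
    also have "\<dots> = 2 * (al * q + mu * x3) - (1 - b) * (al * q + mu * y3)" by (simp add: algebra_simps)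
    also have "\<dots> = 2 * u - (1 - b) * v" using e1 e2 by simp
    finally have "al + mu \<le> 1" using uv by simp
    hence "(u, v) \<in> convex hull {(0,0), (q,q), (x3,y3)}"
      by (intro tri_mem[OF e1 _ al0 mu0]) (use e2 in simp)
    thus ?thesis using sub3 Q1 Q3 by auto
  next
    case False
    hence cs: "v * x3 < u * y3" by simp
    have "v * (2 * y3 - x3) > 0"
    proof -
      have "u * y3 \<le> 2 * v * y3" using uv y3p by (intro mult_right_mono) auto
      thus ?thesis using cs by (simp add: algebra_simps)
    qed
    hence nd: "2 * y3 - x3 > 0" using uv by (simp add: zero_less_mult_iff)
    hence "b * (1 - th) > 0" unfolding x3_def y3_def using D by (simp add: field_simps)
    hence bp: "b > 0" using th by (simp add: zero_less_mult_iff)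
    define th0 where "th0 = 1 - b/g"
    define aa where "aa = (1 - th0) * (1 - g) + 2 * th0"
    define bb where "bb = (1 - th0) / 2"
    have Fu: "u - aa * v \<le> bb" using F[OF bp] unfolding aa_def bb_def th0_def by simp
    have L2: "x2 - aa * (x2/2) = bb"
    proof -
      have "2 - aa = (1 - th0) * (1 + g)" unfolding aa_def by (simp add: algebra_simps)
      hence "1 - aa/2 = (1 - th0) * (1 + g) / 2" by (simp add: field_simps)
      have "x2 - aa * (x2/2) = x2 * (1 - aa/2)" by (simp add: algebra_simps)
      also have "\<dots> = x2 * (1 + g) * ((1 - th0) / 2)" using \<open>1 - aa/2 = _\<close> by simp
      also have "x2 * (1 + g) = 1" unfolding x2_def using gp by simp
      finally show ?thesis unfolding bb_def by simp
    qed
    have L3': "x3 - aa * y3 = bb"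
    proof -
      have "aa = 2 - b - b/g" unfolding aa_def th0_def using gp by (simp add: field_simps)
      hence aeq: "2 - b * (1 - th) - aa = b * th + b / g" by (simp add: algebra_simps)
      have "x3 - aa * y3 = (2 - b * (1 - th) - aa) / D" unfolding x3_def y3_def
        by (simp add: diff_divide_distrib)
      hence "x3 - aa * y3 = (b * th + b / g) / D" unfolding aeq .
      also have "b * th + b / g = bb * D" unfolding bb_def th0_def D_def using gp by (simp add: field_simps)
      finally show ?thesis using D by simp
    qed
    define det where "det = x3 * (x2/2) - y3 * x2"
    have "det = x2 * (x3 - 2 * y3) / 2" unfolding det_def by (simp add: algebra_simps)
    moreover have "x2 * (x3 - 2 * y3) < 0" using x2p nd by (simp add: mult_pos_neg)
    ultimately have det: "det < 0" by simp
    define al where "al = (u * (x2/2) - v * x2) / det"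
    define mu where "mu = (x3 * v - y3 * u) / det"
    have e1: "al * x3 + mu * x2 = u" unfolding al_def mu_def using cramer(1)[OF det_def] det by simp
    have e2: "al * y3 + mu * (x2/2) = v" unfolding al_def mu_def using cramer(2)[OF det_def] det by simp
    have al0: "0 \<le> al" unfolding al_def using uv det x2p
      by (intro divide_nonpos_neg) (auto simp: algebra_simps)
    have mu0: "0 \<le> mu" unfolding mu_def using cs det
      by (intro divide_nonpos_neg) (auto simp: algebra_simps)
    have "al * (x3 - aa * y3) + mu * (x2 - aa * (x2/2)) = bb * (al + mu)" unfolding L2 L3' by (simp add: algebra_simps)
    hence "bb * (al + mu) = al * (x3 - aa * y3) + mu * (x2 - aa * (x2/2))" by simp
    also have "\<dots> = (al * x3 + mu * x2) - aa * (al * y3 + mu * (x2/2))" by (simp add: algebra_simps)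
    also have "\<dots> = u - aa * v" using e1 e2 by simp
    finally have "bb * (al + mu) \<le> bb" using Fu by simp
    moreover have "bb > 0" unfolding bb_def th0_def using bp gp by simp
    ultimately have "al + mu \<le> 1" by simp
    hence "(u, v) \<in> convex hull {(0,0), (x3,y3), (x2,x2/2)}"
      by (intro tri_mem[OF e1 _ al0 mu0]) (use e2 in simp)
    thus ?thesis using sub3' Q2 Q3 by auto
  qed
qed



lemma Fid: fixes t0 g u v :: real shows
  "(1/2 + (1-g) * v - u) + t0 * (- (1/2 + (1-g) * v - u) + (2 * v - u)) = (1-t0)/2 + ((1-t0) * (1-g) + 2 * t0) * v - u"
  by (simp add: algebra_simps) (simp add: field_simps)

lemma Gid: fixes t g u v :: real shows
  "(1/2 + (1-g) * v - u) + t * (- (1/2 + (1-g) * v - u) + (2 * v - u)) = ((1-t) * (1/2 + v - u) + t * (2 * v - u)) - g * ((1 - t) * v)"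
  by (simp add: algebra_simps) (simp add: field_simps)

lemma lim_aff:
  fixes A B w :: real
  assumes B: "B > 0" and w: "w \<ge> 0" and h: "\<And>s. 0 < s \<Longrightarrow> s < B \<Longrightarrow> 0 \<le> A - s * w"
  shows "0 \<le> A - B * w"
proof (rule ccontr)
  assume "\<not> 0 \<le> A - B * w"
  hence c: "A < B * w" by simp
  hence wp: "w > 0" using h[of "B/2"] B w by (cases "w = 0") auto
  define s0 where "s0 = max (B/2) ((A/w + B)/2)"
  have Aw: "A / w < B" using c wp by (simp add: field_simps)
  have m: "A / w < (A / w + B) / 2" using Aw by argo
  have s0: "0 < s0" "s0 < B" "A / w < s0" unfolding s0_def using B Aw m by (auto simp: less_max_iff_disj)
  have "A < s0 * w" using s0(3) wp by (simp add: field_simps)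
  thus False using h[OF s0(1,2)] by simp
qed

lemma lim_th:
  fixes G0 G1 t0 :: real
  assumes t0: "t0 < 1" and h: "\<And>t. t0 < t \<Longrightarrow> t < 1 \<Longrightarrow> 0 \<le> G0 + t * G1"
  shows "0 \<le> G0 + t0 * G1"
proof (rule ccontr)
  assume "\<not> 0 \<le> G0 + t0 * G1"
  hence c: "G0 + t0 * G1 < 0" by simp
  define e where "e = - (G0 + t0 * G1)"
  have e: "e > 0" unfolding e_def using c by simp
  define t where "t = min ((1 - t0)/2) (e / (2 * (\<bar>G1\<bar> + 1)))"
  have tp: "t > 0" unfolding t_def using t0 e by simp
  have "t \<le> (1 - t0)/2" unfolding t_def by (rule min.cobounded1)
  hence t1: "t0 + t < 1" using t0 by argo
  have "t * \<bar>G1\<bar> \<le> e / (2 * (\<bar>G1\<bar> + 1)) * (\<bar>G1\<bar> + 1)"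
    using tp unfolding t_def by (intro mult_mono) auto
  also have "\<dots> = e / 2" by (simp add: field_simps)
  finally have "t * G1 \<le> e / 2" by (smt (verit) abs_ge_self mult_left_mono tp)
  hence "G0 + (t0 + t) * G1 < 0" using e unfolding e_def by (simp add: algebra_simps)
  moreover have "0 \<le> G0 + (t0 + t) * G1" using h[of "t0 + t"] tp t1 by simp
  ultimately show False by simp
qed

lemma C3_full:
  assumes g: "good E u v" and E: "E \<subseteq> {1..2}" "E \<noteq> {}" and v: "v \<ge> 0"
  shows "0 \<le> 1 + (1 - minkowski_dim E) * v - 2 * u"
proof -
  have z: "0 \<le> 1 + v - 2 * u" by (rule C3_zero[OF g E v])
  show ?thesis
  proof (cases "minkowski_dim E > 0")
    case True
    have "0 \<le> (1 + v - 2 * u) - minkowski_dim E * v"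
      by (rule lim_aff[OF True v]) (use C3_pos[OF g E(1) v] in \<open>simp add: algebra_simps\<close>)
    thus ?thesis by (simp add: algebra_simps)
  next
    case False
    hence "minkowski_dim E = 0" using mink_bounds[OF E(1)] by simp
    thus ?thesis using z by simp
  qed
qed

theorem theorem1p4:
  fixes E :: "real set" and \<beta> \<gamma> \<gamma>s :: real
  assumes "E \<subseteq> {1..2}" and "E \<noteq> {}"
    and "\<beta> = minkowski_dim E" and "\<gamma> = qassouad_dim E" and "\<gamma>s = assouad_dim E"
  shows "(\<forall>p. 1 \<le> p \<and> rad_restricted_weak E p (2 * p) \<longrightarrow> p \<ge> max ((\<beta> + 3) / 2) (\<gamma>s + 1))
     \<and> (qA_regular E \<and> 2 * \<gamma> \<ge> \<beta> + 1 \<longrightarrow> T_rad E \<subseteq> quadQ \<beta> \<gamma>)"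
proof
  note E = assms(1,2)
  have bb: "0 \<le> \<beta>" "\<beta> \<le> 1" using mink_bounds[OF E(1)] assms(3) by auto
  show "\<forall>p. 1 \<le> p \<and> rad_restricted_weak E p (2 * p) \<longrightarrow> p \<ge> max ((\<beta> + 3) / 2) (\<gamma>s + 1)"
  proof (intro allI impI, elim conjE)
    fix p :: real assume p: "1 \<le> p" and w: "rad_restricted_weak E p (2 * p)"
    have g: "good E (1/p) (1/(2*p))" by (rule good_weak[OF w]) (use p in auto)
    have v: "1/(2*p) \<ge> 0" using p by simp
    have "0 \<le> 1 + (1 - \<beta>) * (1/(2*p)) - 2 * (1/p)" using C3_full[OF g E v] assms(3) by simp
    hence "0 \<le> (1 + (1 - \<beta>) * (1/(2*p)) - 2 * (1/p)) * (2 * p)" using p by simp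
    also have "\<dots> = 2 * p - 3 - \<beta>" using p by (simp add: field_simps)
    finally have A: "(\<beta> + 3) / 2 \<le> p" by simp
    have B: "\<gamma>s + 1 \<le> p"
    proof (cases "\<gamma>s > 0")
      case True
      have uv: "1/p = 2 * (1/(2*p))" by simp
      have "0 \<le> (1/2 + 1/(2*p) - 1/p) - \<gamma>s * (1/(2*p))"
      proof (rule lim_aff[OF True v])
        fix s assume s: "0 < s" "s < \<gamma>s"
        have h: "0 \<le> 1/2 + (1-s) * (1/(2*p)) - 1/p" by (rule CA[OF g E(1) v uv s(1)]) (use s assms(5) in simp)
        have "(1-s) * (1/(2*p)) = 1 * (1/(2*p)) - s * (1/(2*p))" by (rule left_diff_distrib)
        hence "1/2 + (1-s) * (1/(2*p)) - 1/p = (1/2 + 1/(2*p) - 1/p) - s * (1/(2*p))" by linarith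
        thus "0 \<le> (1/2 + 1/(2*p) - 1/p) - s * (1/(2*p))" using h by simp
      qed
      hence "0 \<le> ((1/2 + 1/(2*p) - 1/p) - \<gamma>s * (1/(2*p))) * (2 * p)" using p by simp
      also have "\<dots> = p - 1 - \<gamma>s" using p by (simp add: field_simps)
      finally show ?thesis by simp
    next
      case False thus ?thesis using p by simp
    qed
    show "p \<ge> max ((\<beta> + 3) / 2) (\<gamma>s + 1)" using A B by simp
  qed
  show "qA_regular E \<and> 2 * \<gamma> \<ge> \<beta> + 1 \<longrightarrow> T_rad E \<subseteq> quadQ \<beta> \<gamma>"
  proof (intro impI, elim conjE)
    assume reg: "qA_regular E" and bg: "2 * \<gamma> \<ge> \<beta> + 1"
    have gp: "\<gamma> > 0" using bg bb by linarith
    have bleg: "\<beta> \<le> \<gamma>" using bg bb by linarith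
    have spec: "\<And>th. 1 - \<beta> / \<gamma> < th \<Longrightarrow> th < 1 \<Longrightarrow> assouad_spec E th = \<gamma>"
    proof -
      fix th assume th: "1 - \<beta> / \<gamma> < th" "th < 1"
      have r: "qassouad_dim E = 0 \<or> (\<forall>\<theta>. 1 - minkowski_dim E / qassouad_dim E < \<theta> \<and> \<theta> < 1 \<longrightarrow>
        assouad_spec E \<theta> = qassouad_dim E)" using reg unfolding qA_regular_def .
      have "qassouad_dim E \<noteq> 0" using gp assms(4) by simp
      hence "\<forall>\<theta>. 1 - minkowski_dim E / qassouad_dim E < \<theta> \<and> \<theta> < 1 \<longrightarrow>
        assouad_spec E \<theta> = qassouad_dim E" using r by blast
      hence "\<forall>\<theta>. 1 - \<beta> / \<gamma> < \<theta> \<and> \<theta> < 1 \<longrightarrow> assouad_spec E \<theta> = \<gamma>"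
        unfolding assms(3,4)[symmetric] .
      thus "assouad_spec E th = \<gamma>" using th by blast
    qed
    have th0: "0 \<le> 1 - \<beta> / \<gamma>" using bleg gp by (simp add: field_simps)
    have g1: "\<beta> > 0 \<Longrightarrow> \<gamma> \<le> 1"
    proof -
      assume bp: "\<beta> > 0"
      define th where "th = (1 - \<beta> / \<gamma> + 1) / 2"
      have "1 - \<beta> / \<gamma> < 1" using bp gp by simp
      hence th: "1 - \<beta> / \<gamma> < th" "th < 1" unfolding th_def by argo+
      have "\<gamma> = assouad_spec E th" using spec[OF th] by simp
      also have "\<dots> \<le> 1" by (rule spec_le1[OF E(1)]) (use th th0 in auto)
      finally show ?thesis .
    qed
    show "T_rad E \<subseteq> quadQ \<beta> \<gamma>"
    proof
      fix z assume z: "z \<in> T_rad E"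
      obtain u v where zuv: "z = (u, v)" by (cases z)
      have uvT: "(u,v) \<in> T_rad E" using z zuv by simp
      have uv01: "0 \<le> u" "0 \<le> v" using uvT unfolding T_rad_def mem_Collect_eq prod.case by blast+
      have g: "good E u v" by (rule good_Trad[OF uvT])
      have c1: "v \<le> u" by (rule C1[OF g E])
      have c2: "u \<le> 2 * v" by (rule C2[OF g E])
      have c3: "2 * u - (1 - \<beta>) * v \<le> 1" using C3_full[OF g E uv01(2)] assms(3) by simp
      have b1: "\<gamma> = 1" if b1': "\<beta> = 1"
      proof -
        have "\<gamma> \<le> 1" using g1 b1' by simp
        thus ?thesis using bg b1' by linarith
      qed
      have F: "(1 - (1 - \<beta>/\<gamma>))/2 + ((1 - (1 - \<beta>/\<gamma>)) * (1 - \<gamma>) + 2 * (1 - \<beta>/\<gamma>)) * v - u \<ge> 0"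
        if bp: "\<beta> > 0"
      proof -
        define G0 where "G0 = 1/2 + (1 - \<gamma>) * v - u"
        define G1 where "G1 = - G0 + (2 * v - u)"
        have "0 \<le> G0 + t * G1" if t: "1 - \<beta> / \<gamma> < t" "t < 1" for t
        proof -
          have t0: "0 < t" using t th0 bp by linarith
          have sp: "assouad_spec E t = \<gamma>" by (rule spec[OF t])
          have "0 \<le> ((1-t) * (1/2 + v - u) + t * (2 * v - u)) - \<gamma> * ((1 - t) * v)"
          proof (rule lim_aff[OF gp])
            show "0 \<le> (1 - t) * v" using t uv01 by simp
            fix s assume s: "0 < s" "s < \<gamma>"
            have "0 \<le> (1-t) * (1/2 + (1-s) * v - u) + t * (2 * v - u)"
              by (rule C4[OF g E(1) uv01(2) c2 t0 t(2) s(1)]) (use s sp in simp)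
            thus "0 \<le> ((1-t) * (1/2 + v - u) + t * (2 * v - u)) - s * ((1 - t) * v)"
              by (simp add: algebra_simps)
          qed
          moreover have "G0 + t * G1 = ((1-t) * (1/2 + v - u) + t * (2 * v - u)) - \<gamma> * ((1 - t) * v)"
            unfolding G0_def G1_def by (rule Gid)
          ultimately show ?thesis by simp
        qed
        moreover have "1 - \<beta>/\<gamma> < 1" using bp gp by simp
        ultimately have "0 \<le> G0 + (1 - \<beta>/\<gamma>) * G1" using lim_th by blast
        thus ?thesis unfolding G0_def G1_def Fid .
      qed
      have "(u, v) \<in> quadQ \<beta> \<gamma>" by (rule quad_mem[OF bb bg[simplified add.commute] b1 uv01 c1 c2 c3 F])
      thus "z \<in> quadQ \<beta> \<gamma>" using zuv by simp
    qed
  qed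
qed

end
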